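(* Let $A\in P(n)$ have all entries real and nonnegative, with $A_{ii}\neq 0$ for all $i$. Let $p=(1,\dots,1)^T$. The following are equivalent: (1) there exists a vector $u\in\mathbb R^n$ with nonnegative entries such that $Au=p$; (2) $I(sp,A)=I(A)$. Moreover, when these hold and $u$ is as in (1), set $y=I(A)\,u$. Then (a) the vector $x=(y_1^{1/2},\dots,y_n^{1/2})^T$ satisfies $\|x\|=1$ and $\|A\circ xx^*\|=I(sp,A)$ (spectral norm); (b) with $J=\{i:u_i\neq0\}$ and $A_J$ the principal submatrix of $A$ with rows and columns indexed by $J$, one has $I(A)=I(A_J)=I(sp,A_J)=I(sp,A)$.
   Context: $P(k)$ denotes positive semidefinite complex $k\times k$ matrices and $\circ$ the Hadamard (entrywise) product. For $C\in P(k)$, with $P_k$ the all-ones $k\times k$ matrix, $I(C)=\max\{\lambda\ge0: C-\lambda P_k\ge0\}$, and $I(sp,C)=\min\{\|C\circ B\|: B\in P(k),\ \|B\|=1\}$ with $\|\cdot\|$ the spectral norm. *)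

theory Defs
  imports "HOL-Analysis.Analysis" "Jordan_Normal_Form.Matrix" "Jordan_Normal_Form.DL_Submatrix"
begin

(* P(k): positive semidefinite complex k x k matrices (complex order from HOL-Library.Complex_Order:
   0 \<le> z  iff  z is real and nonnegative) *)
definition psd :: "nat \<Rightarrow> complex mat \<Rightarrow> bool" where
  "psd k C \<longleftrightarrow> C \<in> carrier_mat k k \<and>
     (\<forall>v \<in> carrier_vec k. 0 \<le> conjugate v \<bullet> (C *\<^sub>v v))"

definition ones_mat :: "nat \<Rightarrow> complex mat" where
  "ones_mat k = mat k k (\<lambda>_. 1)"

definition hadamard :: "complex mat \<Rightarrow> complex mat \<Rightarrow> complex mat" (infixl "\<circ>\<^sub>h" 70) where
  "A \<circ>\<^sub>h B = mat (dim_row A) (dim_col A) (\<lambda>(i,j). A $$ (i,j) * B $$ (i,j))"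

definition vnorm :: "complex vec \<Rightarrow> real" where
  "vnorm v = sqrt (\<Sum>i<dim_vec v. (cmod (v $ i))\<^sup>2)"

definition spec_norm :: "complex mat \<Rightarrow> real" where
  "spec_norm A = Sup {vnorm (A *\<^sub>v v) | v. v \<in> carrier_vec (dim_col A) \<and> vnorm v = 1}"

definition I_mat :: "complex mat \<Rightarrow> real" where
  "I_mat C = Sup {t. t \<ge> 0 \<and> psd (dim_row C) (C - complex_of_real t \<cdot>\<^sub>m ones_mat (dim_row C))}"

definition I_sp :: "complex mat \<Rightarrow> real" where
  "I_sp C = Inf {spec_norm (C \<circ>\<^sub>h B) | B. psd (dim_row C) B \<and> spec_norm B = 1}"

end

theory Submission
  imports Defs
begin

definition Qf :: "nat \<Rightarrow> (nat \<Rightarrow> nat \<Rightarrow> complex) \<Rightarrow> (nat \<Rightarrow> complex) \<Rightarrow> (nat \<Rightarrow> complex) \<Rightarrow> complex" where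
  "Qf n F x y = (\<Sum>i<n. \<Sum>j<n. cnj (x i) * F i j * y j)"

definition psdf :: "nat \<Rightarrow> (nat \<Rightarrow> nat \<Rightarrow> complex) \<Rightarrow> bool" where
  "psdf n F \<longleftrightarrow> (\<forall>x. 0 \<le> Qf n F x x)"

definition ip :: "nat \<Rightarrow> (nat \<Rightarrow> complex) \<Rightarrow> (nat \<Rightarrow> complex) \<Rightarrow> complex" where
  "ip n x y = (\<Sum>i<n. cnj (x i) * y i)"

definition nrm :: "nat \<Rightarrow> (nat \<Rightarrow> complex) \<Rightarrow> real" where
  "nrm n x = sqrt (\<Sum>i<n. (cmod (x i))\<^sup>2)"

definition mvf :: "nat \<Rightarrow> (nat \<Rightarrow> nat \<Rightarrow> complex) \<Rightarrow> (nat \<Rightarrow> complex) \<Rightarrow> nat \<Rightarrow> complex" where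
  "mvf n F x = (\<lambda>i. \<Sum>j<n. F i j * x j)"

lemma psdfD: "psdf n F \<Longrightarrow> Im (Qf n F x x) = 0 \<and> 0 \<le> Re (Qf n F x x)"
  unfolding psdf_def less_eq_complex_def by auto

lemma psdfI: "(\<And>x. Im (Qf n F x x) = 0 \<and> 0 \<le> Re (Qf n F x x)) \<Longrightarrow> psdf n F"
  unfolding psdf_def less_eq_complex_def by auto

lemma Qf_add_right: "Qf n F x (\<lambda>j. y j + z j) = Qf n F x y + Qf n F x z"
  unfolding Qf_def by (simp add: distrib_left sum.distrib)
lemma Qf_add_left: "Qf n F (\<lambda>j. y j + z j) x = Qf n F y x + Qf n F z x"
  unfolding Qf_def by (simp add: distrib_right sum.distrib)
lemma Qf_scale_right: "Qf n F x (\<lambda>j. c * y j) = c * Qf n F x y"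
  unfolding Qf_def by (simp add: sum_distrib_left algebra_simps)
lemma Qf_scale_left: "Qf n F (\<lambda>j. c * y j) x = cnj c * Qf n F y x"
  unfolding Qf_def by (simp add: sum_distrib_left algebra_simps)

lemma Qf_ip: "Qf n F x y = ip n x (mvf n F y)"
  unfolding Qf_def ip_def mvf_def by (simp add: sum_distrib_left algebra_simps)

lemma nrm_L2: "nrm n x = L2_set (\<lambda>i. cmod (x i)) {..<n}"
  unfolding nrm_def L2_set_def by simp

lemma nrm_nonneg: "0 \<le> nrm n x" unfolding nrm_def by (simp add: sum_nonneg)

lemma nrm_sq: "(nrm n x)\<^sup>2 = (\<Sum>i<n. (cmod (x i))\<^sup>2)"
proof -
  have "0 \<le> (\<Sum>i<n. (cmod (x i))\<^sup>2)" by (rule sum_nonneg) simp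
  thus ?thesis unfolding nrm_def by simp
qed

lemma cnj_mult_self: "cnj z * z = complex_of_real ((cmod z)\<^sup>2)"
  using complex_norm_square[of z] by (simp add: mult.commute)

lemma ip_self: "ip n x x = complex_of_real ((nrm n x)\<^sup>2)"
  unfolding nrm_sq ip_def of_real_sum
  by (intro sum.cong refl) (simp add: cnj_mult_self)

lemma ip_cs: "cmod (ip n x y) \<le> nrm n x * nrm n y"
proof -
  have "cmod (ip n x y) \<le> (\<Sum>i<n. cmod (cnj (x i) * y i))"
    unfolding ip_def by (rule norm_sum)
  also have "\<dots> = (\<Sum>i<n. \<bar>cmod (x i)\<bar> * \<bar>cmod (y i)\<bar>)" by (simp add: norm_mult)
  also have "\<dots> \<le> nrm n x * nrm n y" unfolding nrm_L2 by (rule L2_set_mult_ineq)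
  finally show ?thesis .
qed

lemma ip_conj: "ip n y x = cnj (ip n x y)"
  unfolding ip_def by (simp add: mult.commute)

lemma nrm_zero: "nrm n x = 0 \<Longrightarrow> i < n \<Longrightarrow> x i = 0"
proof -
  assume "nrm n x = 0" "i < n"
  hence "(\<Sum>i<n. (cmod (x i))\<^sup>2) = 0" using nrm_sq[of n x] by simp
  hence "\<forall>i\<in>{..<n}. (cmod (x i))\<^sup>2 = 0" by (subst sum_nonneg_eq_0_iff[symmetric]) auto
  thus "x i = 0" using \<open>i<n\<close> by auto
qed

lemma nrm_scale: "nrm n (\<lambda>i. c * x i) = cmod c * nrm n x"
  unfolding nrm_def by (simp add: norm_mult power_mult_distrib sum_distrib_left[symmetric] real_sqrt_mult)

lemma mvf_scale: "mvf n F (\<lambda>i. c * x i) = (\<lambda>i. c * mvf n F x i)"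
  unfolding mvf_def by (simp add: sum_distrib_left algebra_simps)

definition e2 :: "nat \<Rightarrow> nat \<Rightarrow> complex \<Rightarrow> complex \<Rightarrow> nat \<Rightarrow> complex" where
  "e2 i j a b = (\<lambda>t. if t = i then a else if t = j then b else 0)"

lemma sum_e2: 
  fixes i j n :: nat
  assumes "i < n" "j < n" "i \<noteq> j" 
  shows "(\<Sum>t<n. (if t = i then f t else if t = j then g t else 0)) = f i + g j"
proof -
  have "(\<Sum>t<n. (if t = i then f t else if t = j then g t else 0)) = 
        (\<Sum>t\<in>{i,j}. (if t = i then f t else if t = j then g t else 0))"
    using assms by (intro sum.mono_neutral_right) auto
  also have "\<dots> = f i + g j" using assms by simp
  finally show ?thesis .
qed

lemma Qf_e2:
  assumes "i < n" "j < n" "i \<noteq> j"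
  shows "Qf n F (e2 i j a b) (e2 i j a b) = cnj a * F i i * a + cnj a * F i j * b + cnj b * F j i * a + cnj b * F j j * b"
proof -
  have "Qf n F (e2 i j a b) (e2 i j a b) = (\<Sum>s<n. if s = i then (cnj a * F i i * a + cnj a * F i j * b) else if s = j then (cnj b * F j i * a + cnj b * F j j * b) else 0)"
    unfolding Qf_def
  proof (intro sum.cong refl)
    fix s assume s: "s \<in> {..<n}"
    have "(\<Sum>t<n. cnj (e2 i j a b s) * F s t * e2 i j a b t) = (\<Sum>t<n. if t = i then cnj (e2 i j a b s) * F s t * a else if t = j then cnj (e2 i j a b s) * F s t * b else 0)"
      by (intro sum.cong refl) (auto simp: e2_def)
    also have "\<dots> = cnj (e2 i j a b s) * F s i * a + cnj (e2 i j a b s) * F s j * b"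
      by (rule sum_e2[OF assms])
    finally show "(\<Sum>t<n. cnj (e2 i j a b s) * F s t * e2 i j a b t) = (if s = i then (cnj a * F i i * a + cnj a * F i j * b) else if s = j then (cnj b * F j i * a + cnj b * F j j * b) else 0)"
      using assms by (auto simp: e2_def)
  qed
  also have "\<dots> = cnj a * F i i * a + cnj a * F i j * b + (cnj b * F j i * a + cnj b * F j j * b)"
    by (rule sum_e2[OF assms])
  finally show ?thesis by simp
qed

definition e1 :: "nat \<Rightarrow> nat \<Rightarrow> complex" where "e1 i = (\<lambda>t. if t = i then 1 else 0)"

lemma sum_e1_right: "j < n \<Longrightarrow> (\<Sum>t<n. g t * e1 j t) = g j"
proof -
  assume j: "j < n"
  have "(\<Sum>t<n. g t * e1 j t) = (\<Sum>t<n. if t = j then g t else 0)" by (intro sum.cong) (auto simp: e1_def)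
  also have "\<dots> = g j" using j by (simp add: sum.delta)
  finally show ?thesis .
qed

lemma sum_e1_left: "j < n \<Longrightarrow> (\<Sum>t<n. cnj (e1 j t) * g t) = g j"
proof -
  assume j: "j < n"
  have "(\<Sum>t<n. cnj (e1 j t) * g t) = (\<Sum>t<n. if t = j then g t else 0)" by (intro sum.cong) (auto simp: e1_def)
  also have "\<dots> = g j" using j by (simp add: sum.delta)
  finally show ?thesis .
qed

lemma Qf_e1_right: "j < n \<Longrightarrow> Qf n F x (e1 j) = (\<Sum>i<n. cnj (x i) * F i j)"
  unfolding Qf_def by (simp add: sum_e1_right)

lemma Qf_e1: "i < n \<Longrightarrow> Qf n F (e1 i) (e1 i) = F i i"
  by (simp add: Qf_e1_right sum_e1_left)

lemma psdf_diag: "psdf n F \<Longrightarrow> i < n \<Longrightarrow> Im (F i i) = 0 \<and> 0 \<le> Re (F i i)"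
  using psdfD[of n F "e1 i"] Qf_e1[of i n F] by simp

lemma psdf_herm:
  assumes "psdf n F" "i < n" "j < n"
  shows "F j i = cnj (F i j)"
proof (cases "i = j")
  case True thus ?thesis using psdf_diag[OF assms(1,2)] by (simp add: complex_eq_iff)
next
  case False
  have d1: "Im (F i i) = 0" "Im (F j j) = 0" using psdf_diag assms by auto
  have "Im (Qf n F (e2 i j 1 1) (e2 i j 1 1)) = 0" using psdfD[OF assms(1)] by blast
  hence h1: "Im (F i j) + Im (F j i) = 0" using Qf_e2[OF assms(2,3) False, of F 1 1] d1 by simp
  have "Im (Qf n F (e2 i j 1 \<i>) (e2 i j 1 \<i>)) = 0" using psdfD[OF assms(1)] by blast
  hence h2: "Re (F i j) - Re (F j i) = 0" using Qf_e2[OF assms(2,3) False, of F 1 \<i>] d1 by simp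
  show ?thesis using h1 h2 by (simp add: complex_eq_iff)
qed

lemma Qf_swap: 
  assumes "psdf n F" shows "Qf n F y x = cnj (Qf n F x y)"
proof -
  have "Qf n F y x = (\<Sum>j<n. \<Sum>i<n. cnj (y i) * F i j * x j)" unfolding Qf_def by (rule sum.swap[of "\<lambda>i j. cnj (y i) * F i j * x j" "{..<n}" "{..<n}"])
  also have "\<dots> = cnj (Qf n F x y)" unfolding Qf_def cnj_sum
  proof (rule sum.cong[OF refl])
    fix j assume j: "j \<in> {..<n}"
    show "(\<Sum>i<n. cnj (y i) * F i j * x j) = (\<Sum>i<n. cnj (cnj (x j) * F j i * y i))"
    proof (rule sum.cong[OF refl])
      fix i assume i: "i \<in> {..<n}"
      have "F i j = cnj (F j i)" using psdf_herm[OF assms, of j i] j i by simp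
      thus "cnj (y i) * F i j * x j = cnj (cnj (x j) * F j i * y i)" by simp
    qed
  qed
  finally show ?thesis .
qed

lemma Qf_herm_left: "psdf n F \<Longrightarrow> Qf n F x y = ip n (mvf n F x) y"
  using Qf_swap[of n F y x] Qf_ip[of n F y x] ip_conj[of n "mvf n F x" y] by simp

lemma quad_aux:
  fixes a b c :: real
  assumes "\<And>r. 0 \<le> a - 2 * r * b + r\<^sup>2 * b * c" "0 \<le> b" "0 \<le> c"
  shows "b \<le> a * c"
proof (cases "c = 0")
  case True
  show ?thesis
  proof (rule ccontr)
    assume "\<not> b \<le> a * c" hence b: "b > 0" using True by simp
    have "0 \<le> a - 2 * ((a+1)/(2*b)) * b" using assms(1)[of "(a+1)/(2*b)"] True by simp
    thus False using b by (simp add: field_simps)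
  qed
next
  case False
  hence c: "c > 0" using assms by simp
  have "0 \<le> a - 2 * (1/c) * b + (1/c)\<^sup>2 * b * c" by (rule assms(1))
  hence "0 \<le> a - b / c" using c by (simp add: power2_eq_square field_simps)
  thus ?thesis using c by (simp add: field_simps)
qed

lemma Qf_CS:
  assumes "psdf n F"
  shows "(cmod (Qf n F x y))\<^sup>2 \<le> Re (Qf n F x x) * Re (Qf n F y y)"
proof -
  define c where "c = Qf n F x y"
  have key: "0 \<le> Re (Qf n F x x) - 2 * r * (cmod c)\<^sup>2 + r\<^sup>2 * (cmod c)\<^sup>2 * Re (Qf n F y y)" for r :: real
  proof -
    define t where "t = - (complex_of_real r * cnj c)"
    have "Qf n F (\<lambda>j. x j + t * y j) (\<lambda>j. x j + t * y j) = 
       Qf n F x x + t * Qf n F x y + cnj t * Qf n F y x + cnj t * t * Qf n F y y"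
      by (simp add: Qf_add_left Qf_add_right Qf_scale_left Qf_scale_right algebra_simps)
    also have "\<dots> = Qf n F x x - 2 * r * (c * cnj c) + r\<^sup>2 * (c * cnj c) * Qf n F y y"
      unfolding t_def Qf_swap[OF assms, of y x] c_def[symmetric]
      by (simp add: power2_eq_square algebra_simps)
    also have "\<dots> = Qf n F x x - of_real (2 * r * (cmod c)\<^sup>2) + of_real (r\<^sup>2 * (cmod c)\<^sup>2) * Qf n F y y"
    proof -
      have cc: "c * cnj c = of_real ((cmod c)\<^sup>2)" using cnj_mult_self[of c] by (simp add: mult.commute)
      show ?thesis unfolding cc by simp
    qed
    finally have "Re (Qf n F (\<lambda>j. x j + t * y j) (\<lambda>j. x j + t * y j)) = Re (Qf n F x x) - 2 * r * (cmod c)\<^sup>2 + r\<^sup>2 * (cmod c)\<^sup>2 * Re (Qf n F y y)"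
      by simp
    thus ?thesis using psdfD[OF assms] by metis
  qed
  have "(cmod c)\<^sup>2 \<le> Re (Qf n F x x) * Re (Qf n F y y)"
    by (rule quad_aux[OF key]) (use psdfD[OF assms] in auto)
  thus ?thesis unfolding c_def .
qed

lemma Qf_cong: "(\<And>i j. i < n \<Longrightarrow> j < n \<Longrightarrow> F i j = G i j) \<Longrightarrow> Qf n F x y = Qf n G x y"
  unfolding Qf_def by (intro sum.cong refl) auto

lemma Qf_diff: "Qf n (\<lambda>i j. F i j - G i j) x y = Qf n F x y - Qf n G x y"
  unfolding Qf_def by (simp add: algebra_simps sum_subtractf)

lemma Qf_add: "Qf n (\<lambda>i j. F i j + G i j) x y = Qf n F x y + Qf n G x y"
  unfolding Qf_def by (simp add: algebra_simps sum.distrib)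

lemma Qf_rank1: "Qf n (\<lambda>i j. v i * cnj (v j)) x y = ip n x v * ip n v y"
  unfolding Qf_def ip_def sum_product by (intro sum.cong refl) (simp add: algebra_simps)

lemma Qf_e1_both: "i < n \<Longrightarrow> j < n \<Longrightarrow> Qf n F (e1 i) (e1 j) = F i j"
  by (simp add: Qf_e1_right sum_e1_left)

lemma gram_aux:
  assumes "psdf n F" "k \<le> n" "\<forall>i j. i < k \<or> j < k \<longrightarrow> F i j = 0"
  shows "\<exists>w. \<forall>i<n. \<forall>j<n. F i j = (\<Sum>l\<in>{k..<n}. w l i * cnj (w l j))"
  using assms
proof (induction "n - k" arbitrary: k F)
  case 0
  hence "k = n" by simp
  thus ?case using 0 by auto
next
  case (Suc d)
  hence kn: "k < n" and d: "d = n - Suc k" by auto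
  have Fkk: "Im (F k k) = 0" "0 \<le> Re (F k k)" using psdf_diag[OF Suc(3) kn] by auto
  have split: "(\<Sum>l\<in>{k..<n}. w l i * cnj (w l j)) = w k i * cnj (w k j) + (\<Sum>l\<in>{Suc k..<n}. w l i * cnj (w l j))" for w :: "nat \<Rightarrow> nat \<Rightarrow> complex" and i j
    using kn by (simp add: sum.atLeast_Suc_lessThan)
  show ?case
  proof (cases "F k k = 0")
    case True
    have row: "F k j = 0" if j: "j < n" for j
    proof -
      have "(cmod (Qf n F (e1 k) (e1 j)))\<^sup>2 \<le> Re (Qf n F (e1 k) (e1 k)) * Re (Qf n F (e1 j) (e1 j))"
        by (rule Qf_CS[OF Suc(3)])
      hence "(cmod (F k j))\<^sup>2 \<le> 0" using True kn j by (simp add: Qf_e1_both)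
      thus ?thesis by simp
    qed
    have col: "F j k = 0" if j: "j < n" for j
      using psdf_herm[OF Suc(3) kn j] row[OF j] by simp
    define G where "G = (\<lambda>i j. if i = k \<or> j = k then 0 else F i j)"
    have GF: "G i j = F i j" if "i < n" "j < n" for i j
      using row col that unfolding G_def by auto
    have psdG: "psdf n G" unfolding psdf_def
      using Suc(3) unfolding psdf_def by (subst Qf_cong[OF GF]) auto
    have zG: "\<forall>i j. i < Suc k \<or> j < Suc k \<longrightarrow> G i j = 0"
      using Suc(5) unfolding G_def by (auto simp: less_Suc_eq)
    obtain w where w: "\<forall>i<n. \<forall>j<n. G i j = (\<Sum>l\<in>{Suc k..<n}. w l i * cnj (w l j))"
      using Suc(1)[OF d psdG _ zG] kn by auto
    define w' where "w' = w(k := (\<lambda>_. 0))"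
    have "\<forall>i<n. \<forall>j<n. F i j = (\<Sum>l\<in>{k..<n}. w' l i * cnj (w' l j))"
    proof (intro allI impI)
      fix i j assume ij: "i < n" "j < n"
      have "(\<Sum>l\<in>{k..<n}. w' l i * cnj (w' l j)) = (\<Sum>l\<in>{Suc k..<n}. w' l i * cnj (w' l j))"
        unfolding split by (simp add: w'_def)
      also have "\<dots> = (\<Sum>l\<in>{Suc k..<n}. w l i * cnj (w l j))"
        by (intro sum.cong refl) (auto simp: w'_def)
      also have "\<dots> = F i j" using w ij GF by auto
      finally show "F i j = (\<Sum>l\<in>{k..<n}. w' l i * cnj (w' l j))" by simp
    qed
    thus ?thesis by blast
  next
    case False
    define d0 where "d0 = Re (F k k)"
    have Fkk': "F k k = complex_of_real d0" using Fkk unfolding d0_def by (simp add: complex_eq_iff)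
    have "d0 \<noteq> 0" using False Fkk' by auto
    moreover have "d0 \<ge> 0" using Fkk(2) unfolding d0_def .
    ultimately have d0pos: "d0 > 0" by linarith
    define s where "s = sqrt d0"
    have spos: "s > 0" and ss: "s * s = d0" using d0pos unfolding s_def by auto
    define v where "v = (\<lambda>i. F i k / complex_of_real s)"
    define G where "G = (\<lambda>i j. if i < n \<and> j < n then F i j - v i * cnj (v j) else 0)"
    have GF: "G i j = F i j - v i * cnj (v j)" if "i < n" "j < n" for i j
      using that unfolding G_def by auto
    have psdG: "psdf n G"
    proof (rule psdfI)
      fix x
      have "Qf n G x x = Qf n F x x - Qf n (\<lambda>i j. v i * cnj (v j)) x x"
        by (subst Qf_cong[OF GF]) (auto simp: Qf_diff)
      also have "\<dots> = Qf n F x x - complex_of_real ((cmod (ip n v x))\<^sup>2)"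
        by (simp add: Qf_rank1 ip_conj[of n x v] cnj_mult_self)
      finally have eq: "Qf n G x x = Qf n F x x - complex_of_real ((cmod (ip n v x))\<^sup>2)" .
      have "Qf n F x (e1 k) = (\<Sum>i<n. cnj (x i) * F i k)" using kn by (simp add: Qf_e1_right)
      also have "\<dots> = complex_of_real s * ip n x v" unfolding ip_def v_def sum_distrib_left
        using spos by (intro sum.cong refl) simp
      finally have q: "Qf n F x (e1 k) = complex_of_real s * ip n x v" .
      have "(cmod (Qf n F x (e1 k)))\<^sup>2 \<le> Re (Qf n F x x) * Re (Qf n F (e1 k) (e1 k))"
        by (rule Qf_CS[OF Suc(3)])
      hence "d0 * (cmod (ip n v x))\<^sup>2 \<le> Re (Qf n F x x) * d0"
        using kn spos unfolding q by (simp add: Qf_e1 Fkk' norm_mult power_mult_distrib ss[symmetric] ip_conj[of n v x] power2_eq_square)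
      hence "(cmod (ip n v x))\<^sup>2 \<le> Re (Qf n F x x)" using d0pos by (simp add: mult.commute)
      thus "Im (Qf n G x x) = 0 \<and> 0 \<le> Re (Qf n G x x)" unfolding eq using psdfD[OF Suc(3), of x] by simp
    qed
    have zG: "\<forall>i j. i < Suc k \<or> j < Suc k \<longrightarrow> G i j = 0"
    proof (intro allI impI)
      fix i j assume ij: "i < Suc k \<or> j < Suc k"
      show "G i j = 0"
      proof (cases "i < n \<and> j < n")
        case False thus ?thesis unfolding G_def by auto
      next
        case True
        have "i < k \<or> i = k \<or> j < k \<or> j = k" using ij by auto
        moreover
        { assume "i < k"
          hence "F i j = 0" "F i k = 0" using Suc(5) by auto
          hence "G i j = 0" using True unfolding G_def v_def by simp }
        moreover
        { assume "j < k"
          hence "F i j = 0" "F j k = 0" using Suc(5) by auto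
          hence "G i j = 0" using True unfolding G_def v_def by simp }
        moreover
        { assume ik: "i = k"
          have h: "cnj (F j k) = F k j" using psdf_herm[OF Suc(3), of k j] True kn by simp
          have "v k * cnj (v j) = F k k * cnj (F j k) / (complex_of_real s * complex_of_real s)"
            unfolding v_def by simp
          also have "\<dots> = F k j" unfolding h Fkk' of_real_mult[symmetric] ss using d0pos by simp
          finally have "G i j = 0" using True ik unfolding G_def by simp }
        moreover
        { assume jk: "j = k"
          have "v i * cnj (v k) = F i k * cnj (F k k) / (complex_of_real s * complex_of_real s)"
            unfolding v_def by simp
          also have "\<dots> = F i k" unfolding Fkk' of_real_mult[symmetric] ss using d0pos by simp
          finally have "G i j = 0" using True jk unfolding G_def by simp }
        ultimately show ?thesis by blast
      qed
    qed
    obtain w where w: "\<forall>i<n. \<forall>j<n. G i j = (\<Sum>l\<in>{Suc k..<n}. w l i * cnj (w l j))"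
      using Suc(1)[OF d psdG _ zG] kn by auto
    define w' where "w' = w(k := v)"
    have "\<forall>i<n. \<forall>j<n. F i j = (\<Sum>l\<in>{k..<n}. w' l i * cnj (w' l j))"
    proof (intro allI impI)
      fix i j assume ij: "i < n" "j < n"
      have "(\<Sum>l\<in>{k..<n}. w' l i * cnj (w' l j)) = v i * cnj (v j) + (\<Sum>l\<in>{Suc k..<n}. w' l i * cnj (w' l j))"
        unfolding split by (simp add: w'_def)
      also have "(\<Sum>l\<in>{Suc k..<n}. w' l i * cnj (w' l j)) = (\<Sum>l\<in>{Suc k..<n}. w l i * cnj (w l j))"
        by (intro sum.cong refl) (auto simp: w'_def)
      also have "\<dots> = G i j" using w ij by auto
      finally show "F i j = (\<Sum>l\<in>{k..<n}. w' l i * cnj (w' l j))" using GF[OF ij] by simp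
    qed
    thus ?thesis by blast
  qed
qed

lemma gram:
  assumes "psdf n F"
  shows "\<exists>w. \<forall>i<n. \<forall>j<n. F i j = (\<Sum>l<n. w l i * cnj (w l j))"
  using gram_aux[OF assms, of 0] by (simp add: atLeast0LessThan)

lemma schur:
  assumes "psdf n F" "psdf n G"
  shows "psdf n (\<lambda>i j. F i j * G i j)"
proof -
  obtain w where w: "\<forall>i<n. \<forall>j<n. G i j = (\<Sum>l<n. w l i * cnj (w l j))" using gram[OF assms(2)] by blast
  show ?thesis
  proof (rule psdfI)
    fix x
    have "Qf n (\<lambda>i j. F i j * G i j) x x = (\<Sum>i<n. \<Sum>j<n. \<Sum>l<n. cnj (x i * cnj (w l i)) * F i j * (x j * cnj (w l j)))"
      unfolding Qf_def
    proof (intro sum.cong refl)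
      fix i j assume ij: "i \<in> {..<n}" "j \<in> {..<n}"
      show "cnj (x i) * (F i j * G i j) * x j = (\<Sum>l<n. cnj (x i * cnj (w l i)) * F i j * (x j * cnj (w l j)))"
        using w ij by (simp add: sum_distrib_left sum_distrib_right algebra_simps)
    qed
    also have "\<dots> = (\<Sum>i<n. \<Sum>l<n. \<Sum>j<n. cnj (x i * cnj (w l i)) * F i j * (x j * cnj (w l j)))"
      by (intro sum.cong refl sum.swap)
    also have "\<dots> = (\<Sum>l<n. \<Sum>i<n. \<Sum>j<n. cnj (x i * cnj (w l i)) * F i j * (x j * cnj (w l j)))"
      by (rule sum.swap)
    also have "\<dots> = (\<Sum>l<n. Qf n F (\<lambda>i. x i * cnj (w l i)) (\<lambda>i. x i * cnj (w l i)))"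
      unfolding Qf_def ..
    finally have eq: "Qf n (\<lambda>i j. F i j * G i j) x x = (\<Sum>l<n. Qf n F (\<lambda>i. x i * cnj (w l i)) (\<lambda>i. x i * cnj (w l i)))" .
    show "Im (Qf n (\<lambda>i j. F i j * G i j) x x) = 0 \<and> 0 \<le> Re (Qf n (\<lambda>i j. F i j * G i j) x x)"
      unfolding eq Im_sum Re_sum using psdfD[OF assms(1)] by (auto intro: sum_nonneg)
  qed
qed

definition snf :: "nat \<Rightarrow> (nat \<Rightarrow> nat \<Rightarrow> complex) \<Rightarrow> real" where
  "snf n F = Sup {nrm n (mvf n F x) | x. nrm n x = 1}"

lemma cmod_le_nrm: "j < n \<Longrightarrow> cmod (x j) \<le> nrm n x"
  unfolding nrm_L2 by (rule member_le_L2_set) auto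

lemma nrm_cong: "(\<And>i. i < n \<Longrightarrow> x i = y i) \<Longrightarrow> nrm n x = nrm n y"
  unfolding nrm_def by (intro arg_cong[where f=sqrt] sum.cong) auto

lemma mvf_cong: "(\<And>i. i < n \<Longrightarrow> x i = y i) \<Longrightarrow> mvf n F x = mvf n F y"
  unfolding mvf_def by (intro ext sum.cong) auto

lemma nrm_e1: "i < n \<Longrightarrow> nrm n (e1 i) = 1"
proof -
  assume i: "i < n"
  have "(\<Sum>t<n. (cmod (e1 i t))\<^sup>2) = (\<Sum>t<n. if t = i then 1 else 0)" by (intro sum.cong) (auto simp: e1_def)
  also have "\<dots> = 1" using i by simp
  finally show ?thesis unfolding nrm_def by simp
qed

lemma snf_bdd: "bdd_above {nrm n (mvf n F x) | x. nrm n x = 1}"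
proof (rule bdd_aboveI)
  fix r assume "r \<in> {nrm n (mvf n F x) | x. nrm n x = 1}"
  then obtain x where x: "nrm n x = 1" "r = nrm n (mvf n F x)" by blast
  have "r \<le> (\<Sum>i<n. \<bar>cmod (mvf n F x i)\<bar>)" unfolding x nrm_L2 by (rule L2_set_le_sum_abs)
  also have "\<dots> \<le> (\<Sum>i<n. \<Sum>j<n. cmod (F i j))"
  proof (rule sum_mono)
    fix i assume "i \<in> {..<n}"
    have "\<bar>cmod (mvf n F x i)\<bar> \<le> (\<Sum>j<n. cmod (F i j * x j))" unfolding mvf_def by (simp add: norm_sum)
    also have "\<dots> \<le> (\<Sum>j<n. cmod (F i j))"
    proof (rule sum_mono)
      fix j assume "j \<in> {..<n}"
      hence "cmod (x j) \<le> 1" using cmod_le_nrm[of j n x] x by simp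
      thus "cmod (F i j * x j) \<le> cmod (F i j)" by (simp add: norm_mult mult_left_le)
    qed
    finally show "\<bar>cmod (mvf n F x i)\<bar> \<le> (\<Sum>j<n. cmod (F i j))" .
  qed
  finally show "r \<le> (\<Sum>i<n. \<Sum>j<n. cmod (F i j))" .
qed

lemma snf_ge: "nrm n x = 1 \<Longrightarrow> nrm n (mvf n F x) \<le> snf n F"
  unfolding snf_def by (rule cSup_upper[OF _ snf_bdd]) blast

lemma snf_le: "n > 0 \<Longrightarrow> (\<And>x. nrm n x = 1 \<Longrightarrow> nrm n (mvf n F x) \<le> c) \<Longrightarrow> snf n F \<le> c"
  unfolding snf_def
proof (rule cSup_least)
  assume "n > 0"
  thus "{nrm n (mvf n F x) | x. nrm n x = 1} \<noteq> {}" using nrm_e1[of 0 n] by blast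
qed auto

lemma snf_nonneg: "n > 0 \<Longrightarrow> 0 \<le> snf n F"
  using snf_ge[OF nrm_e1[of 0 n], of F] nrm_nonneg[of n] by (meson order_trans)

lemma mvf_zero: "(\<And>j. j < n \<Longrightarrow> x j = 0) \<Longrightarrow> mvf n F x i = 0"
  unfolding mvf_def by simp

lemma snf_scaled: "nrm n (mvf n F x) \<le> snf n F * nrm n x"
proof (cases "nrm n x = 0")
  case True
  hence "nrm n (mvf n F x) = 0" unfolding nrm_def using nrm_zero[OF True] by (simp add: mvf_zero)
  thus ?thesis using True by simp
next
  case False
  hence pos: "nrm n x > 0" using nrm_nonneg[of n x] by simp
  define c where "c = complex_of_real (1 / nrm n x)"
  have "nrm n (\<lambda>i. c * x i) = 1" unfolding nrm_scale c_def using pos by (simp add: norm_divide)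
  hence "nrm n (mvf n F (\<lambda>i. c * x i)) \<le> snf n F" by (rule snf_ge)
  hence "nrm n (mvf n F x) / nrm n x \<le> snf n F" unfolding mvf_scale nrm_scale c_def using pos by (simp add: norm_divide)
  thus ?thesis using pos by (simp add: field_simps)
qed

lemma snf_cong: "(\<And>i j. i < n \<Longrightarrow> j < n \<Longrightarrow> F i j = G i j) \<Longrightarrow> snf n F = snf n G"
proof -
  assume h: "\<And>i j. i < n \<Longrightarrow> j < n \<Longrightarrow> F i j = G i j"
  have "nrm n (mvf n F x) = nrm n (mvf n G x)" for x
    by (rule nrm_cong) (simp add: mvf_def h)
  thus ?thesis unfolding snf_def by simp
qed

lemma Qf_vec: "Qf n F (\<lambda>i. vec n x $ i) (\<lambda>i. vec n y $ i) = Qf n F x y"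
  unfolding Qf_def by (intro sum.cong refl) auto

lemma quad_vec:
  assumes "M \<in> carrier_mat n n" "v \<in> carrier_vec n"
  shows "conjugate v \<bullet> (M *\<^sub>v v) = Qf n (\<lambda>i j. M $$ (i,j)) (\<lambda>i. v $ i) (\<lambda>i. v $ i)"
proof -
  have "conjugate v \<bullet> (M *\<^sub>v v) = (\<Sum>i\<in>{0..<n}. cnj (v $ i) * (\<Sum>j\<in>{0..<n}. M $$ (i,j) * v $ j))"
    using assms unfolding scalar_prod_def
    by (intro sum.cong) (auto simp: conjugate_complex_def row_def scalar_prod_def)
  also have "\<dots> = Qf n (\<lambda>i j. M $$ (i,j)) (\<lambda>i. v $ i) (\<lambda>i. v $ i)"
    unfolding Qf_def atLeast0LessThan by (simp add: sum_distrib_left mult.assoc)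
  finally show ?thesis .
qed

lemma psd_iff: "psd n M \<longleftrightarrow> M \<in> carrier_mat n n \<and> psdf n (\<lambda>i j. M $$ (i,j))"
proof
  assume h: "psd n M"
  hence M: "M \<in> carrier_mat n n" unfolding psd_def by simp
  have "0 \<le> Qf n (\<lambda>i j. M $$ (i,j)) x x" for x
  proof -
    have "0 \<le> conjugate (vec n x) \<bullet> (M *\<^sub>v vec n x)" using h unfolding psd_def by auto
    thus ?thesis unfolding quad_vec[OF M vec_carrier] Qf_vec .
  qed
  thus "M \<in> carrier_mat n n \<and> psdf n (\<lambda>i j. M $$ (i,j))" using M unfolding psdf_def by simp
next
  assume h: "M \<in> carrier_mat n n \<and> psdf n (\<lambda>i j. M $$ (i,j))"
  show "psd n M" unfolding psd_def using h quad_vec[of M n] unfolding psdf_def by auto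
qed

lemma vnorm_eq: "v \<in> carrier_vec n \<Longrightarrow> vnorm v = nrm n (\<lambda>i. v $ i)"
  unfolding vnorm_def nrm_def by simp

lemma mult_vec_eq:
  assumes "M \<in> carrier_mat n n" "v \<in> carrier_vec n" "i < n"
  shows "(M *\<^sub>v v) $ i = mvf n (\<lambda>i j. M $$ (i,j)) (\<lambda>i. v $ i) i"
  using assms unfolding mvf_def by (simp add: scalar_prod_def Matrix.row_def atLeast0LessThan)

lemma row_eq:
  assumes "M \<in> carrier_mat n n" "v \<in> carrier_vec n" "i < n"
  shows "Matrix.row M i \<bullet> v = mvf n (\<lambda>i j. M $$ (i,j)) (\<lambda>i. v $ i) i"
  using assms unfolding mvf_def by (simp add: scalar_prod_def Matrix.row_def atLeast0LessThan)

lemma spec_norm_eq: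
  assumes "M \<in> carrier_mat n n"
  shows "spec_norm M = snf n (\<lambda>i j. M $$ (i,j))"
proof -
  have "{vnorm (M *\<^sub>v v) | v. v \<in> carrier_vec (dim_col M) \<and> vnorm v = 1} = 
        {nrm n (mvf n (\<lambda>i j. M $$ (i,j)) x) | x. nrm n x = 1}" (is "?L = ?R")
  proof
    show "?L \<subseteq> ?R"
    proof
      fix r assume "r \<in> ?L"
      then obtain v where v: "v \<in> carrier_vec n" "vnorm v = 1" "r = vnorm (M *\<^sub>v v)" using assms by auto
      have "r = nrm n (mvf n (\<lambda>i j. M $$ (i,j)) (\<lambda>i. v $ i))"
        unfolding v(3) using assms v(1) by (subst vnorm_eq[of _ n]) (auto intro!: nrm_cong simp: row_eq)
      moreover have "nrm n (\<lambda>i. v $ i) = 1" using v vnorm_eq by simp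
      ultimately show "r \<in> ?R" by blast
    qed
  next
    show "?R \<subseteq> ?L"
    proof
      fix r assume "r \<in> ?R"
      then obtain x where x: "nrm n x = 1" "r = nrm n (mvf n (\<lambda>i j. M $$ (i,j)) x)" by blast
      have vx: "(\<lambda>i. vec n x $ i) = (\<lambda>i. if i < n then x i else vec n x $ i)" by auto
      have "vnorm (vec n x) = 1" using x by (subst vnorm_eq[of _ n]) (auto intro: trans[OF nrm_cong])
      moreover have "r = vnorm (M *\<^sub>v vec n x)"
        unfolding x(2) using assms
        by (subst vnorm_eq[of _ n]) (auto intro!: nrm_cong simp: row_eq mvf_def)
      ultimately show "r \<in> ?L" using assms by auto
    qed
  qed
  thus ?thesis unfolding spec_norm_def snf_def by simp
qed

lemma hadamard_carrier: "A \<in> carrier_mat n n \<Longrightarrow> A \<circ>\<^sub>h B \<in> carrier_mat n n"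
  unfolding hadamard_def by auto

lemma hadamard_index: "A \<in> carrier_mat n n \<Longrightarrow> i < n \<Longrightarrow> j < n \<Longrightarrow> (A \<circ>\<^sub>h B) $$ (i,j) = A $$ (i,j) * B $$ (i,j)"
  unfolding hadamard_def by auto

lemma I_sp_eq:
  assumes "A \<in> carrier_mat n n"
  shows "I_sp A = Inf {snf n (\<lambda>i j. A $$ (i,j) * B $$ (i,j)) | B. psd n B \<and> snf n (\<lambda>i j. B $$ (i,j)) = 1}"
proof -
  have "{spec_norm (A \<circ>\<^sub>h B) | B. psd (dim_row A) B \<and> spec_norm B = 1} = 
    {snf n (\<lambda>i j. A $$ (i,j) * B $$ (i,j)) | B. psd n B \<and> snf n (\<lambda>i j. B $$ (i,j)) = 1}"
  proof -
    have "spec_norm (A \<circ>\<^sub>h B) = snf n (\<lambda>i j. A $$ (i,j) * B $$ (i,j))" for B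
      unfolding spec_norm_eq[OF hadamard_carrier[OF assms]]
      by (rule snf_cong) (simp add: hadamard_index[OF assms])
    moreover have "psd n B \<Longrightarrow> spec_norm B = snf n (\<lambda>i j. B $$ (i,j))" for B
      using spec_norm_eq psd_iff by blast
    ultimately show ?thesis using assms by auto
  qed
  thus ?thesis unfolding I_sp_def by simp
qed

lemma Qf_const: "Qf n (\<lambda>i j. c) x y = c * (cnj (\<Sum>i<n. x i) * (\<Sum>j<n. y j))"
proof -
  have "c * (cnj (\<Sum>i<n. x i) * (\<Sum>j<n. y j)) = c * (\<Sum>i<n. \<Sum>j<n. cnj (x i) * y j)"
    by (simp only: cnj_sum sum_product)
  also have "\<dots> = (\<Sum>i<n. \<Sum>j<n. c * (cnj (x i) * y j))" by (simp add: sum_distrib_left)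
  finally have "c * (cnj (\<Sum>i<n. x i) * (\<Sum>j<n. y j)) = (\<Sum>i<n. \<Sum>j<n. c * (cnj (x i) * y j))" .
  thus ?thesis unfolding Qf_def by (simp add: algebra_simps)
qed

lemma I_mat_eq:
  assumes "psd n A"
  shows "I_mat A = Sup {t. t \<ge> 0 \<and> (\<forall>x. t * (cmod (\<Sum>i<n. x i))\<^sup>2 \<le> Re (Qf n (\<lambda>i j. A $$ (i,j)) x x))}"
proof -
  have A: "A \<in> carrier_mat n n" "psdf n (\<lambda>i j. A $$ (i,j))" using assms psd_iff by auto
  have "psd n (A - complex_of_real t \<cdot>\<^sub>m ones_mat n) \<longleftrightarrow> (\<forall>x. t * (cmod (\<Sum>i<n. x i))\<^sup>2 \<le> Re (Qf n (\<lambda>i j. A $$ (i,j)) x x))" for t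
  proof -
    have c: "A - complex_of_real t \<cdot>\<^sub>m ones_mat n \<in> carrier_mat n n" using A unfolding ones_mat_def by auto
    have e: "Qf n (\<lambda>i j. (A - complex_of_real t \<cdot>\<^sub>m ones_mat n) $$ (i,j)) x x = 
       Qf n (\<lambda>i j. A $$ (i,j)) x x - complex_of_real (t * (cmod (\<Sum>i<n. x i))\<^sup>2)" for x
    proof -
      have "Qf n (\<lambda>i j. (A - complex_of_real t \<cdot>\<^sub>m ones_mat n) $$ (i,j)) x x = 
            Qf n (\<lambda>i j. A $$ (i,j) - complex_of_real t) x x"
        using A by (intro Qf_cong) (auto simp: ones_mat_def)
      also have "\<dots> = Qf n (\<lambda>i j. A $$ (i,j)) x x - complex_of_real t * (cnj (\<Sum>i<n. x i) * (\<Sum>j<n. x j))"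
        by (simp add: Qf_diff Qf_const)
      also have "\<dots> = Qf n (\<lambda>i j. A $$ (i,j)) x x - complex_of_real (t * (cmod (\<Sum>i<n. x i))\<^sup>2)"
        unfolding cnj_mult_self by simp
      finally show ?thesis .
    qed
    show ?thesis unfolding psd_iff psdf_def e less_eq_complex_def using c psdfD[OF A(2)] by auto
  qed
  thus ?thesis unfolding I_mat_def using A by simp
qed

lemma cmod_diff_sq: "(cmod (a - b))\<^sup>2 = (cmod a)\<^sup>2 - 2 * Re (cnj b * a) + (cmod b)\<^sup>2"
  unfolding cmod_power2 by (simp add: power2_eq_square algebra_simps)

lemma nrm_diff_sq: "(nrm n (\<lambda>i. a i - b i))\<^sup>2 = (nrm n a)\<^sup>2 - 2 * Re (ip n b a) + (nrm n b)\<^sup>2"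
  unfolding nrm_sq ip_def cmod_diff_sq Re_sum by (simp add: sum.distrib sum_subtractf sum_distrib_left)

lemma ip_add_left: "ip n (\<lambda>i. a i + b i) w = ip n a w + ip n b w"
  unfolding ip_def by (simp add: algebra_simps sum.distrib)

lemma Qf_diag: "Qf n (\<lambda>i j. if i = j then D i else 0) x y = (\<Sum>i<n. cnj (x i) * D i * y i)"
  unfolding Qf_def
proof (rule sum.cong[OF refl])
  fix i assume i: "i \<in> {..<n}"
  have "(\<Sum>j<n. cnj (x i) * (if i = j then D i else 0) * y j) = (\<Sum>j<n. if j = i then cnj (x i) * D i * y j else 0)"
    by (intro sum.cong) auto
  also have "\<dots> = cnj (x i) * D i * y i" using i by simp
  finally show "(\<Sum>j<n. cnj (x i) * (if i = j then D i else 0) * y j) = cnj (x i) * D i * y i" .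
qed

lemma real_aux:
  fixes p q X R :: real
  assumes "0 \<le> p" "0 \<le> q" "0 \<le> X" "p \<le> X + q" "X\<^sup>2 \<le> R" "0 \<le> R"
  shows "p\<^sup>2 - 2 * p * q \<le> R"
proof (cases "p \<le> 2 * q")
  case True
  hence "p\<^sup>2 - 2 * p * q \<le> 0" using assms(1) by (simp add: power2_eq_square mult_left_mono algebra_simps)
  thus ?thesis using assms by linarith
next
  case False
  hence "p - q \<le> X" "0 \<le> p - q" using assms by auto
  hence "(p - q)\<^sup>2 \<le> X\<^sup>2" by (rule power_mono)
  hence "p\<^sup>2 - 2 * p * q \<le> X\<^sup>2" using assms by (simp add: power2_eq_square algebra_simps) (smt (verit) assms(2) mult_nonneg_nonneg)
  thus ?thesis using assms by linarith
qed

lemma key_lower: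
  assumes n: "n > 0" and psdA: "psdf n Af" and psdB: "psdf n Bf" and nB: "snf n Bf = 1"
    and c: "\<And>z. nrm n z = 1 \<Longrightarrow> c \<le> Re (\<Sum>i<n. \<Sum>j<n. Af i j * complex_of_real ((cmod (z i))\<^sup>2 * (cmod (z j))\<^sup>2))"
  shows "c \<le> snf n (\<lambda>i j. Af i j * Bf i j)"
proof (rule ccontr)
  define S where "S = snf n (\<lambda>i j. Af i j * Bf i j)"
  assume "\<not> c \<le> snf n (\<lambda>i j. Af i j * Bf i j)"
  hence dpos: "c - S > 0" unfolding S_def by simp
  define d where "d = c - S"
  define K where "K = (\<Sum>i<n. Re (Af i i)) + 1"
  have K0: "(\<Sum>i<n. Re (Af i i)) \<ge> 0" using psdf_diag[OF psdA] by (intro sum_nonneg) auto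
  hence Kpos: "K > 0" unfolding K_def by simp
  define \<eta> where "\<eta> = d / (2 * K)"
  have eta_pos: "\<eta> > 0" unfolding \<eta>_def d_def using dpos Kpos by simp
  have eta_small: "\<eta> * (K - 1) < d"
  proof -
    have "\<eta> * (K - 1) < \<eta> * (2 * K)" using eta_pos Kpos by (intro mult_strict_left_mono) auto
    also have "\<dots> = d" unfolding \<eta>_def using Kpos by simp
    finally show ?thesis .
  qed
  define \<epsilon> where "\<epsilon> = \<eta>\<^sup>2 / 8"
  have eps_pos: "\<epsilon> > 0" unfolding \<epsilon>_def using eta_pos by simp
  have ne: "{nrm n (mvf n Bf x) | x. nrm n x = 1} \<noteq> {}" using nrm_e1[OF n] by blast
  have "1 - \<epsilon> < Sup {nrm n (mvf n Bf x) | x. nrm n x = 1}" using nB eps_pos unfolding snf_def by simp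
  from less_cSupD[OF ne this] obtain z where z: "nrm n z = 1" "1 - \<epsilon> < nrm n (mvf n Bf z)" by blast
  define v where "v = mvf n Bf z"
  define nv where "nv = nrm n v"
  have contr: "\<And>w. nrm n (mvf n Bf w) \<le> nrm n w" using snf_scaled[of n Bf] nB by simp
  have nv1: "nv \<le> 1" unfolding nv_def v_def using contr[of z] z by simp
  have nv0: "0 \<le> nv" unfolding nv_def by (rule nrm_nonneg)
  have QB_le: "Re (Qf n Bf w w) \<le> (nrm n w)\<^sup>2" for w
  proof -
    have "Re (Qf n Bf w w) \<le> cmod (ip n w (mvf n Bf w))" unfolding Qf_ip by (rule complex_Re_le_cmod)
    also have "\<dots> \<le> nrm n w * nrm n (mvf n Bf w)" by (rule ip_cs)
    also have "\<dots> \<le> nrm n w * nrm n w" using contr[of w] nrm_nonneg[of n w] by (rule mult_left_mono)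
    finally show ?thesis by (simp add: power2_eq_square)
  qed
  have QBzz_le: "Re (Qf n Bf z z) \<le> 1" using QB_le[of z] z by simp
  have c_step: "nv\<^sup>2 \<le> Re (Qf n Bf z z)"
  proof (cases "nv = 0")
    case True thus ?thesis using psdfD[OF psdB, of z] by simp
  next
    case False
    hence nvpos: "nv > 0" using nv0 by simp
    have "Qf n Bf v z = complex_of_real (nv\<^sup>2)" unfolding Qf_ip v_def[symmetric] ip_self nv_def ..
    hence eqq: "cmod (Qf n Bf v z) = nv\<^sup>2" by (simp only: norm_of_real) simp
    have "(nv\<^sup>2)\<^sup>2 \<le> Re (Qf n Bf v v) * Re (Qf n Bf z z)" using Qf_CS[OF psdB, of v z] unfolding eqq .
    also have "\<dots> \<le> nv\<^sup>2 * Re (Qf n Bf z z)"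
      using QB_le[of v] psdfD[OF psdB, of z] unfolding nv_def by (intro mult_right_mono) auto
    finally have "nv\<^sup>2 * nv\<^sup>2 \<le> nv\<^sup>2 * Re (Qf n Bf z z)" by (simp add: power2_eq_square)
    moreover have "nv\<^sup>2 > 0" using nvpos by simp
    ultimately show ?thesis using mult_le_cancel_left_pos by blast
  qed
  define r where "r = (\<lambda>i. v i - z i)"
  have r_sq: "(nrm n r)\<^sup>2 \<le> 1 - nv\<^sup>2"
  proof -
    have "(nrm n r)\<^sup>2 = nv\<^sup>2 - 2 * Re (ip n z v) + 1" unfolding r_def nrm_diff_sq nv_def z by simp
    also have "ip n z v = Qf n Bf z z" unfolding Qf_ip v_def ..
    finally show ?thesis using c_step by simp
  qed
  have sq: "2 * (1 - nv) - (1 - nv\<^sup>2) = (1 - nv)\<^sup>2" by (simp add: power2_eq_square algebra_simps)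
  have "1 - nv\<^sup>2 \<le> 2 * (1 - nv)" using sq zero_le_power2[of "1 - nv"] by linarith
  also have "\<dots> < 2 * \<epsilon>" using z(2) unfolding nv_def v_def by simp
  finally have "(nrm n r)\<^sup>2 < (\<eta> / 2)\<^sup>2" using r_sq unfolding \<epsilon>_def by (simp add: power2_eq_square)
  hence r_small: "2 * nrm n r < \<eta>" using eta_pos nrm_nonneg[of n r] power2_less_imp_less by fastforce
  have e_step: "(cmod (ip n z w))\<^sup>2 - \<eta> * (nrm n w)\<^sup>2 \<le> Re (Qf n Bf w w)" for w
  proof -
    have vzr: "v = (\<lambda>i. z i + r i)" unfolding r_def by simp
    have QBzw: "Qf n Bf z w = ip n z w + ip n r w"
      unfolding Qf_herm_left[OF psdB] v_def[symmetric] by (subst vzr) (rule ip_add_left)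
    have "(cmod (Qf n Bf z w))\<^sup>2 \<le> Re (Qf n Bf z z) * Re (Qf n Bf w w)" by (rule Qf_CS[OF psdB])
    also have "\<dots> \<le> Re (Qf n Bf w w)" using QBzz_le psdfD[OF psdB, of w] psdfD[OF psdB, of z] by (intro mult_left_le_one_le) auto
    finally have X: "(cmod (ip n z w + ip n r w))\<^sup>2 \<le> Re (Qf n Bf w w)" unfolding QBzw .
    have tri: "cmod (ip n z w) \<le> cmod (ip n z w + ip n r w) + cmod (ip n r w)"
      using norm_triangle_ineq4[of "ip n z w + ip n r w" "ip n r w"] by simp
    have main: "(cmod (ip n z w))\<^sup>2 - 2 * cmod (ip n z w) * cmod (ip n r w) \<le> Re (Qf n Bf w w)"
      by (rule real_aux[OF _ _ _ tri X]) (use psdfD[OF psdB, of w] in auto)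
    have pz: "cmod (ip n z w) \<le> nrm n w" using ip_cs[of n z w] z by simp
    have pr: "cmod (ip n r w) \<le> nrm n r * nrm n w" by (rule ip_cs)
    have "2 * cmod (ip n z w) * cmod (ip n r w) \<le> 2 * nrm n w * (nrm n r * nrm n w)"
      using pz pr nrm_nonneg[of n w] by (intro mult_mono) auto
    also have "\<dots> = (2 * nrm n r) * (nrm n w)\<^sup>2" by (simp add: power2_eq_square)
    also have "\<dots> \<le> \<eta> * (nrm n w)\<^sup>2" using r_small by (intro mult_right_mono) auto
    finally show ?thesis using main by linarith
  qed
  define F' where "F' = (\<lambda>i j. Bf i j - z i * cnj (z j) + (if i = j then complex_of_real \<eta> else 0))"
  have psdF': "psdf n F'"
  proof (rule psdfI)
    fix w
    have "Qf n F' w w = Qf n Bf w w - Qf n (\<lambda>i j. z i * cnj (z j)) w w + Qf n (\<lambda>i j. if i = j then complex_of_real \<eta> else 0) w w"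
      unfolding F'_def Qf_add Qf_diff ..
    also have "\<dots> = Qf n Bf w w - complex_of_real ((cmod (ip n z w))\<^sup>2) + complex_of_real (\<eta> * (nrm n w)\<^sup>2)"
    proof -
      have "Qf n (\<lambda>i j. z i * cnj (z j)) w w = complex_of_real ((cmod (ip n z w))\<^sup>2)"
        unfolding Qf_rank1 ip_conj[of n w z] by (rule cnj_mult_self)
      moreover have "Qf n (\<lambda>i j. if i = j then complex_of_real \<eta> else 0) w w = complex_of_real (\<eta> * (nrm n w)\<^sup>2)"
      proof -
        have "(\<Sum>i<n. cnj (w i) * complex_of_real \<eta> * w i) = complex_of_real \<eta> * ip n w w"
          unfolding ip_def sum_distrib_left by (simp add: algebra_simps)
        thus ?thesis unfolding Qf_diag ip_self by simp
      qed
      ultimately show ?thesis by simp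
    qed
    finally show "Im (Qf n F' w w) = 0 \<and> 0 \<le> Re (Qf n F' w w)"
      using psdfD[OF psdB, of w] e_step[of w] by simp
  qed
  have psdAF: "psdf n (\<lambda>i j. Af i j * F' i j)" by (rule schur[OF psdA psdF'])
  define T where "T = (\<Sum>i<n. \<Sum>j<n. Af i j * complex_of_real ((cmod (z i))\<^sup>2 * (cmod (z j))\<^sup>2))"
  define U where "U = (\<Sum>i<n. Af i i * complex_of_real ((cmod (z i))\<^sup>2))"
  have QAF: "Qf n (\<lambda>i j. Af i j * F' i j) z z = Qf n (\<lambda>i j. Af i j * Bf i j) z z - T + complex_of_real \<eta> * U"
  proof -
    have "Qf n (\<lambda>i j. Af i j * F' i j) z z = Qf n (\<lambda>i j. Af i j * Bf i j) z z - Qf n (\<lambda>i j. Af i j * (z i * cnj (z j))) z z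
        + Qf n (\<lambda>i j. if i = j then Af i i * complex_of_real \<eta> else 0) z z"
      unfolding Qf_add[symmetric] Qf_diff[symmetric] F'_def by (rule Qf_cong) (simp add: algebra_simps)
    moreover have "Qf n (\<lambda>i j. Af i j * (z i * cnj (z j))) z z = T"
      unfolding Qf_def T_def
    proof (intro sum.cong refl)
      fix i j
      have "cnj (z i) * (Af i j * (z i * cnj (z j))) * z j = Af i j * ((cnj (z i) * z i) * (cnj (z j) * z j))"
        by (simp add: algebra_simps)
      thus "cnj (z i) * (Af i j * (z i * cnj (z j))) * z j = Af i j * complex_of_real ((cmod (z i))\<^sup>2 * (cmod (z j))\<^sup>2)"
        unfolding cnj_mult_self by simp
    qed
    moreover have "Qf n (\<lambda>i j. if i = j then Af i i * complex_of_real \<eta> else 0) z z = complex_of_real \<eta> * U"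
      unfolding Qf_diag U_def sum_distrib_left
    proof (intro sum.cong refl)
      fix i
      have "cnj (z i) * (Af i i * complex_of_real \<eta>) * z i = complex_of_real \<eta> * (Af i i * (cnj (z i) * z i))"
        by (simp add: algebra_simps)
      thus "cnj (z i) * (Af i i * complex_of_real \<eta>) * z i = complex_of_real \<eta> * (Af i i * complex_of_real ((cmod (z i))\<^sup>2))"
        unfolding cnj_mult_self by simp
    qed
    ultimately show ?thesis by simp
  qed
  have ReU: "Re U \<le> K - 1"
  proof -
    have "Re U = (\<Sum>i<n. Re (Af i i) * (cmod (z i))\<^sup>2)" unfolding U_def Re_sum by simp
    also have "\<dots> \<le> (\<Sum>i<n. Re (Af i i))"
    proof (rule sum_mono)
      fix i assume i: "i \<in> {..<n}"
      have "cmod (z i) \<le> 1" using cmod_le_nrm[of i n z] i z by simp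
      hence "(cmod (z i))\<^sup>2 \<le> 1" by (simp add: power_le_one)
      thus "Re (Af i i) * (cmod (z i))\<^sup>2 \<le> Re (Af i i)" using psdf_diag[OF psdA, of i] i
        by (simp add: mult_left_le)
    qed
    finally show ?thesis unfolding K_def by simp
  qed
  have "0 \<le> Re (Qf n (\<lambda>i j. Af i j * F' i j) z z)" using psdfD[OF psdAF] by blast
  hence "Re T - \<eta> * Re U \<le> Re (Qf n (\<lambda>i j. Af i j * Bf i j) z z)" unfolding QAF by simp
  moreover have "c \<le> Re T" unfolding T_def by (rule c[OF z(1)])
  moreover have "\<eta> * Re U \<le> \<eta> * (K - 1)" using ReU eta_pos by simp
  moreover have "Re (Qf n (\<lambda>i j. Af i j * Bf i j) z z) \<le> S"
  proof -
    have "Re (Qf n (\<lambda>i j. Af i j * Bf i j) z z) \<le> cmod (ip n z (mvf n (\<lambda>i j. Af i j * Bf i j) z))"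
      unfolding Qf_ip by (rule complex_Re_le_cmod)
    also have "\<dots> \<le> nrm n z * nrm n (mvf n (\<lambda>i j. Af i j * Bf i j) z)" by (rule ip_cs)
    also have "\<dots> \<le> S" unfolding S_def using snf_ge[OF z(1)] z(1) by simp
    finally show ?thesis .
  qed
  ultimately show False using eta_small unfolding d_def by linarith
qed

lemma ip_cong: "(\<And>i. i < n \<Longrightarrow> x i = x' i) \<Longrightarrow> (\<And>i. i < n \<Longrightarrow> y i = y' i) \<Longrightarrow> ip n x y = ip n x' y'"
  unfolding ip_def by (intro sum.cong) auto

lemma rank1_psdf: "psdf n (\<lambda>i j. v i * cnj (v j))"
proof (rule psdfI)
  fix x
  have "Qf n (\<lambda>i j. v i * cnj (v j)) x x = complex_of_real ((cmod (ip n v x))\<^sup>2)"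
    unfolding Qf_rank1 ip_conj[of n x v] by (rule cnj_mult_self)
  thus "Im (Qf n (\<lambda>i j. v i * cnj (v j)) x x) = 0 \<and> 0 \<le> Re (Qf n (\<lambda>i j. v i * cnj (v j)) x x)" by simp
qed

lemma rank1_snf:
  assumes n: "n > 0" and v: "nrm n v = 1"
  shows "snf n (\<lambda>i j. v i * cnj (v j)) = 1"
proof (rule antisym)
  have mv: "mvf n (\<lambda>i j. v i * cnj (v j)) w = (\<lambda>i. ip n v w * v i)" for w
    unfolding mvf_def ip_def by (simp add: sum_distrib_left sum_distrib_right algebra_simps)
  show "snf n (\<lambda>i j. v i * cnj (v j)) \<le> 1"
  proof (rule snf_le[OF n])
    fix w assume w: "nrm n w = 1"
    have "nrm n (mvf n (\<lambda>i j. v i * cnj (v j)) w) = cmod (ip n v w)" unfolding mv nrm_scale v by simp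
    also have "\<dots> \<le> 1" using ip_cs[of n v w] v w by simp
    finally show "nrm n (mvf n (\<lambda>i j. v i * cnj (v j)) w) \<le> 1" .
  qed
  have "nrm n (mvf n (\<lambda>i j. v i * cnj (v j)) v) = 1" unfolding mv nrm_scale ip_self v by simp
  thus "1 \<le> snf n (\<lambda>i j. v i * cnj (v j))" using snf_ge[OF v] by metis
qed

lemma weighted_cs:
  fixes c p q :: "nat \<Rightarrow> real"
  assumes "\<And>j. j < n \<Longrightarrow> 0 \<le> c j"
  shows "(\<Sum>j<n. c j * \<bar>p j\<bar> * \<bar>q j\<bar>)\<^sup>2 \<le> (\<Sum>j<n. c j * (p j)\<^sup>2) * (\<Sum>j<n. c j * (q j)\<^sup>2)"
proof -
  have "(\<Sum>j<n. c j * \<bar>p j\<bar> * \<bar>q j\<bar>) = (\<Sum>j<n. \<bar>sqrt (c j) * p j\<bar> * \<bar>sqrt (c j) * q j\<bar>)"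
    using assms by (intro sum.cong refl) (simp add: abs_mult real_sqrt_mult[symmetric])
  also have "\<dots> \<le> L2_set (\<lambda>j. sqrt (c j) * p j) {..<n} * L2_set (\<lambda>j. sqrt (c j) * q j) {..<n}"
    by (rule L2_set_mult_ineq)
  finally have le: "(\<Sum>j<n. c j * \<bar>p j\<bar> * \<bar>q j\<bar>) \<le> L2_set (\<lambda>j. sqrt (c j) * p j) {..<n} * L2_set (\<lambda>j. sqrt (c j) * q j) {..<n}" .
  have nn: "0 \<le> (\<Sum>j<n. c j * \<bar>p j\<bar> * \<bar>q j\<bar>)" using assms by (intro sum_nonneg) auto
  have "(\<Sum>j<n. c j * \<bar>p j\<bar> * \<bar>q j\<bar>)\<^sup>2 \<le> (L2_set (\<lambda>j. sqrt (c j) * p j) {..<n} * L2_set (\<lambda>j. sqrt (c j) * q j) {..<n})\<^sup>2"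
    using le nn by (rule power_mono)
  also have "\<dots> = (\<Sum>j<n. c j * (p j)\<^sup>2) * (\<Sum>j<n. c j * (q j)\<^sup>2)"
    unfolding power_mult_distrib L2_set_def
    using assms by (subst real_sqrt_pow2, (intro sum_nonneg; simp))+ (simp add: power_mult_distrib)
  finally show ?thesis .
qed

lemma main_fun:
  fixes a :: "nat \<Rightarrow> nat \<Rightarrow> real" and u :: "nat \<Rightarrow> real"
  assumes n: "n > 0" and psdA: "psdf n Af"
    and Aa: "\<And>i j. i < n \<Longrightarrow> j < n \<Longrightarrow> Af i j = complex_of_real (a i j)"
    and a0: "\<And>i j. i < n \<Longrightarrow> j < n \<Longrightarrow> 0 \<le> a i j"
    and u0: "\<And>i. i < n \<Longrightarrow> 0 \<le> u i"
    and Au: "\<And>i. i < n \<Longrightarrow> (\<Sum>j<n. a i j * u j) = 1"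
  defines "s \<equiv> (\<Sum>i<n. u i)"
  shows "s > 0"
    and "\<And>x. (cmod (\<Sum>i<n. x i))\<^sup>2 \<le> s * Re (Qf n Af x x)"
    and "Re (Qf n Af (\<lambda>i. complex_of_real (u i)) (\<lambda>i. complex_of_real (u i))) = s"
    and "snf n (\<lambda>i j. Af i j * complex_of_real (sqrt (u i / s) * sqrt (u j / s))) \<le> 1 / s"
proof -
  have sym: "a j i = a i j" if "i < n" "j < n" for i j
    using psdf_herm[OF psdA that] Aa that by simp
  define U where "U = (\<lambda>i. complex_of_real (u i))"
  have mvU: "mvf n Af U i = 1" if "i < n" for i
  proof -
    have "mvf n Af U i = complex_of_real (\<Sum>j<n. a i j * u j)" unfolding mvf_def U_def of_real_sum
      using that Aa by (intro sum.cong) auto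
    thus ?thesis using Au that by simp
  qed
  have QUx: "Qf n Af U x = (\<Sum>j<n. x j)" for x
  proof -
    have "Qf n Af U x = ip n (mvf n Af U) x" by (rule Qf_herm_left[OF psdA])
    also have "\<dots> = ip n (\<lambda>_. 1) x" by (rule ip_cong) (auto simp: mvU)
    finally show ?thesis unfolding ip_def by simp
  qed
  have QUU: "Qf n Af U U = complex_of_real s"
  proof -
    have "Qf n Af U U = (\<Sum>j<n. U j)" by (rule QUx)
    also have "\<dots> = complex_of_real s" unfolding U_def s_def by simp
    finally show ?thesis .
  qed
  show Q3: "Re (Qf n Af (\<lambda>i. complex_of_real (u i)) (\<lambda>i. complex_of_real (u i))) = s"
    using QUU unfolding U_def by simp
  have s0: "s \<ge> 0" unfolding s_def using u0 by (intro sum_nonneg) auto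
  show spos: "s > 0"
  proof (rule ccontr)
    assume "\<not> s > 0" hence "s = 0" using s0 by simp
    hence "\<forall>i\<in>{..<n}. u i = 0" unfolding s_def using u0 by (subst sum_nonneg_eq_0_iff[symmetric]) auto
    hence "(\<Sum>j<n. a 0 j * u j) = 0" by simp
    thus False using Au[OF n] by simp
  qed
  show Q2: "(cmod (\<Sum>i<n. x i))\<^sup>2 \<le> s * Re (Qf n Af x x)" for x
    using Qf_CS[OF psdA, of U x] unfolding QUx[of x] QUU by simp
  define xs where "xs = (\<lambda>i. sqrt (u i / s))"
  have xs2: "(xs i)\<^sup>2 = u i / s" if "i < n" for i
  proof -
    have "0 \<le> u i / s" using u0[OF that] spos by (rule divide_nonneg_pos)
    thus ?thesis unfolding xs_def by simp
  qed
  have xs0: "0 \<le> xs i" if "i < n" for i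
  proof -
    have "0 \<le> u i / s" using u0[OF that] spos by (rule divide_nonneg_pos)
    thus ?thesis unfolding xs_def by simp
  qed
  have rowsum: "(\<Sum>j<n. a i j * (xs j)\<^sup>2) = 1 / s" if i: "i < n" for i
  proof -
    have "(\<Sum>j<n. a i j * (xs j)\<^sup>2) = (\<Sum>j<n. a i j * u j) / s"
      unfolding sum_divide_distrib by (intro sum.cong refl) (simp add: xs2)
    thus ?thesis using Au[OF i] by simp
  qed
  define M where "M = (\<lambda>i j. Af i j * complex_of_real (sqrt (u i / s) * sqrt (u j / s)))"
  show "snf n M \<le> 1 / s"
  proof (rule snf_le[OF n])
    fix v assume v: "nrm n v = 1"
    have bound_i: "(cmod (mvf n M v i))\<^sup>2 \<le> (xs i)\<^sup>2 * (1 / s) * (\<Sum>j<n. a i j * (cmod (v j))\<^sup>2)" if i: "i < n" for i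
    proof -
      have "cmod (mvf n M v i) \<le> (\<Sum>j<n. cmod (M i j * v j))" unfolding mvf_def by (rule norm_sum)
      also have "\<dots> = xs i * (\<Sum>j<n. a i j * \<bar>xs j\<bar> * \<bar>cmod (v j)\<bar>)"
        unfolding sum_distrib_left
      proof (intro sum.cong refl)
        fix j assume j: "j \<in> {..<n}"
        have "M i j = complex_of_real (a i j * (xs i * xs j))" unfolding M_def using Aa i j by (simp add: xs_def)
        hence "cmod (M i j * v j) = \<bar>a i j * (xs i * xs j)\<bar> * cmod (v j)" by (simp only: norm_mult norm_of_real)
        also have "\<dots> = xs i * (a i j * \<bar>xs j\<bar> * \<bar>cmod (v j)\<bar>)" using a0[OF i, of j] xs0[OF i] xs0[of j] j
          by (simp add: abs_mult)
        finally show "cmod (M i j * v j) = xs i * (a i j * \<bar>xs j\<bar> * \<bar>cmod (v j)\<bar>)" .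
      qed
      finally have le1: "cmod (mvf n M v i) \<le> xs i * (\<Sum>j<n. a i j * \<bar>xs j\<bar> * \<bar>cmod (v j)\<bar>)" .
      have nn: "0 \<le> cmod (mvf n M v i)" by simp
      have "(cmod (mvf n M v i))\<^sup>2 \<le> (xs i * (\<Sum>j<n. a i j * \<bar>xs j\<bar> * \<bar>cmod (v j)\<bar>))\<^sup>2"
        using le1 nn by (rule power_mono)
      also have "\<dots> = (xs i)\<^sup>2 * (\<Sum>j<n. a i j * \<bar>xs j\<bar> * \<bar>cmod (v j)\<bar>)\<^sup>2" by (simp add: power_mult_distrib)
      also have "\<dots> \<le> (xs i)\<^sup>2 * ((\<Sum>j<n. a i j * (xs j)\<^sup>2) * (\<Sum>j<n. a i j * (cmod (v j))\<^sup>2))"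
        using i a0 by (intro mult_left_mono weighted_cs) auto
      finally show ?thesis unfolding rowsum[OF i] by simp
    qed
    have "(nrm n (mvf n M v))\<^sup>2 \<le> (\<Sum>i<n. (xs i)\<^sup>2 * (1 / s) * (\<Sum>j<n. a i j * (cmod (v j))\<^sup>2))"
      unfolding nrm_sq by (rule sum_mono) (use bound_i in auto)
    also have "\<dots> = (1 / s) * (\<Sum>j<n. (cmod (v j))\<^sup>2 * (\<Sum>i<n. a j i * (xs i)\<^sup>2))"
    proof -
      have "(\<Sum>i<n. (xs i)\<^sup>2 * (1 / s) * (\<Sum>j<n. a i j * (cmod (v j))\<^sup>2)) = 
            (1 / s) * (\<Sum>i<n. \<Sum>j<n. (cmod (v j))\<^sup>2 * (a i j * (xs i)\<^sup>2))"
        unfolding sum_distrib_left by (intro sum.cong refl) (simp add: algebra_simps)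
      also have "\<dots> = (1 / s) * (\<Sum>j<n. \<Sum>i<n. (cmod (v j))\<^sup>2 * (a i j * (xs i)\<^sup>2))"
        by (subst sum.swap) rule
      also have "\<dots> = (1 / s) * (\<Sum>j<n. (cmod (v j))\<^sup>2 * (\<Sum>i<n. a j i * (xs i)\<^sup>2))"
        unfolding sum_distrib_left by (intro arg_cong[where f="\<lambda>t. (1/s) * t"] sum.cong refl) (simp add: sym)
      finally show ?thesis .
    qed
    also have "\<dots> = (1 / s) * (1 / s)"
    proof -
      have "(\<Sum>j<n. (cmod (v j))\<^sup>2 * (\<Sum>i<n. a j i * (xs i)\<^sup>2)) = (\<Sum>j<n. (cmod (v j))\<^sup>2 * (1 / s))"
        by (intro sum.cong refl) (simp add: rowsum)
      also have "\<dots> = (nrm n v)\<^sup>2 * (1 / s)" unfolding nrm_sq sum_distrib_right ..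
      finally show ?thesis using v by simp
    qed
    finally have "(nrm n (mvf n M v))\<^sup>2 \<le> (1 / s)\<^sup>2" by (simp add: power2_eq_square)
    thus "nrm n (mvf n M v) \<le> 1 / s" using spos nrm_nonneg[of n] by (meson abs_le_square_iff order_trans abs_ge_self less_imp_le abs_of_nonneg power2_le_imp_le divide_nonneg_pos zero_le_one)
  qed
qed

lemma psdf_cong: "psdf n F \<Longrightarrow> (\<And>i j. i < n \<Longrightarrow> j < n \<Longrightarrow> F i j = G i j) \<Longrightarrow> psdf n G"
  unfolding psdf_def using Qf_cong[of n F G] by metis

lemma Au_conv:
  fixes A :: "complex mat" and u :: "real vec"
  assumes A: "A \<in> carrier_mat n n" and u: "u \<in> carrier_vec n"
    and Au: "A *\<^sub>v map_vec complex_of_real u = vec n (\<lambda>_. 1)"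
    and ent: "\<forall>i<n. \<forall>j<n. Im (A $$ (i,j)) = 0 \<and> Re (A $$ (i,j)) \<ge> 0"
    and i: "i < n"
  shows "(\<Sum>j<n. Re (A $$ (i,j)) * u $ j) = 1"
proof -
  have "(A *\<^sub>v map_vec complex_of_real u) $ i = (\<Sum>j<n. A $$ (i,j) * complex_of_real (u $ j))"
    using A u i by (simp add: scalar_prod_def Matrix.row_def atLeast0LessThan)
  also have "\<dots> = complex_of_real (\<Sum>j<n. Re (A $$ (i,j)) * u $ j)"
    unfolding of_real_sum using ent i by (intro sum.cong refl) (simp add: complex_eq_iff)
  finally show ?thesis using Au i by (simp add: complex_eq_iff)
qed

lemma main_mat:
  fixes A :: "complex mat" and u :: "real vec"
  assumes n: "n > 0" and psd: "psd n A"
    and ent: "\<forall>i<n. \<forall>j<n. Im (A $$ (i,j)) = 0 \<and> Re (A $$ (i,j)) \<ge> 0"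
    and u: "u \<in> carrier_vec n" "\<forall>i<n. u $ i \<ge> 0" "A *\<^sub>v map_vec complex_of_real u = vec n (\<lambda>_. 1)"
  defines "s \<equiv> (\<Sum>i<n. u $ i)"
  shows "s > 0" "I_mat A = 1 / s" "I_sp A = 1 / s"
    "vnorm (vec n (\<lambda>i. complex_of_real (sqrt ((I_mat A \<cdot>\<^sub>v u) $ i)))) = 1"
    "spec_norm (A \<circ>\<^sub>h mat n n (\<lambda>(i,j). vec n (\<lambda>i. complex_of_real (sqrt ((I_mat A \<cdot>\<^sub>v u) $ i))) $ i *
        cnj (vec n (\<lambda>i. complex_of_real (sqrt ((I_mat A \<cdot>\<^sub>v u) $ i))) $ j))) = I_sp A"
proof -
  have A: "A \<in> carrier_mat n n" "psdf n (\<lambda>i j. A $$ (i,j))" using psd psd_iff by auto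
  define a where "a = (\<lambda>i j. Re (A $$ (i,j)))"
  have Aa: "A $$ (i,j) = complex_of_real (a i j)" if "i < n" "j < n" for i j
    using ent that unfolding a_def by (simp add: complex_eq_iff)
  have a0: "0 \<le> a i j" if "i < n" "j < n" for i j using ent that unfolding a_def by simp
  have Au: "(\<Sum>j<n. a i j * u $ j) = 1" if "i < n" for i
    using Au_conv[OF A(1) u(1) u(3) ent that] unfolding a_def .
  note MF = main_fun[of n "\<lambda>i j. A $$ (i,j)" a "\<lambda>i. u $ i", OF n A(2) Aa a0 _ Au, folded s_def]
  have spos: "s > 0" using MF(1) u(2) by simp
  thus "s > 0" .
  have Q2: "(cmod (\<Sum>i<n. x i))\<^sup>2 \<le> s * Re (Qf n (\<lambda>i j. A $$ (i,j)) x x)" for x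
    using MF(2) u(2) by simp
  have Q3: "Re (Qf n (\<lambda>i j. A $$ (i,j)) (\<lambda>i. complex_of_real (u $ i)) (\<lambda>i. complex_of_real (u $ i))) = s"
    using MF(3) u(2) by simp
  define M where "M = (\<lambda>i j. A $$ (i,j) * complex_of_real (sqrt (u $ i / s) * sqrt (u $ j / s)))"
  have Q4: "snf n M \<le> 1 / s" using MF(4) u(2) unfolding M_def by simp
  define T where "T = {t. t \<ge> 0 \<and> (\<forall>x. t * (cmod (\<Sum>i<n. x i))\<^sup>2 \<le> Re (Qf n (\<lambda>i j. A $$ (i,j)) x x))}"
  have "1 / s \<in> T"
  proof -
    have "(1 / s) * (cmod (\<Sum>i<n. x i))\<^sup>2 \<le> Re (Qf n (\<lambda>i j. A $$ (i,j)) x x)" for x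
      using Q2[of x] spos by (simp add: field_simps)
    thus ?thesis unfolding T_def using spos by simp
  qed
  moreover have "t \<le> 1 / s" if "t \<in> T" for t
  proof -
    have t: "t \<ge> 0" "t * (cmod (\<Sum>i<n. complex_of_real (u $ i)))\<^sup>2 \<le> s" using that Q3 unfolding T_def by auto
    have "cmod (\<Sum>i<n. complex_of_real (u $ i)) = s" unfolding s_def of_real_sum[symmetric] norm_of_real
      using spos unfolding s_def by simp
    hence "t * s * s \<le> s" using t by (simp add: power2_eq_square mult.assoc)
    thus ?thesis using spos by (simp add: field_simps)
  qed
  ultimately have Imat: "I_mat A = 1 / s" unfolding I_mat_eq[OF psd] T_def[symmetric]
    by (intro cSup_eq_maximum) auto
  thus "I_mat A = 1 / s" .
  define xs where "xs = (\<lambda>i. sqrt (u $ i / s))"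
  define B0 where "B0 = mat n n (\<lambda>(i,j). complex_of_real (xs i * xs j))"
  define v where "v = (\<lambda>i. complex_of_real (xs i))"
  have B0e: "B0 $$ (i,j) = v i * cnj (v j)" if "i < n" "j < n" for i j
    using that unfolding B0_def v_def by simp
  have psdB0: "psd n B0" unfolding psd_iff
    using psdf_cong[OF rank1_psdf[of n v], of "\<lambda>i j. B0 $$ (i,j)"] B0e unfolding B0_def by auto
  have nv: "nrm n v = 1"
  proof -
    have "(\<Sum>i<n. (cmod (v i))\<^sup>2) = (\<Sum>i<n. u $ i / s)"
    proof (intro sum.cong refl)
      fix i assume "i \<in> {..<n}"
      hence "0 \<le> u $ i / s" using u(2) spos by (simp add: divide_nonneg_pos)
      thus "(cmod (v i))\<^sup>2 = u $ i / s" unfolding v_def xs_def by simp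
    qed
    also have "\<dots> = 1" unfolding s_def sum_divide_distrib[symmetric] using spos s_def by simp
    finally show ?thesis unfolding nrm_def by simp
  qed
  have snfB0: "snf n (\<lambda>i j. B0 $$ (i,j)) = 1"
    using rank1_snf[OF n nv] snf_cong[of n "\<lambda>i j. B0 $$ (i,j)" "\<lambda>i j. v i * cnj (v j)"] B0e by simp
  have AB0: "snf n (\<lambda>i j. A $$ (i,j) * B0 $$ (i,j)) = snf n M"
    by (rule snf_cong) (simp add: B0_def M_def xs_def)
  have lowerc: "1 / s \<le> Re (\<Sum>i<n. \<Sum>j<n. A $$ (i,j) * complex_of_real ((cmod (z i))\<^sup>2 * (cmod (z j))\<^sup>2))"
    if z: "nrm n z = 1" for z
  proof -
    define x where "x = (\<lambda>i. complex_of_real ((cmod (z i))\<^sup>2))"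
    have "(\<Sum>i<n. x i) = complex_of_real ((nrm n z)\<^sup>2)" unfolding x_def nrm_sq of_real_sum ..
    hence sx: "cmod (\<Sum>i<n. x i) = 1" using z by simp
    have "Qf n (\<lambda>i j. A $$ (i,j)) x x = (\<Sum>i<n. \<Sum>j<n. A $$ (i,j) * complex_of_real ((cmod (z i))\<^sup>2 * (cmod (z j))\<^sup>2))"
      unfolding Qf_def x_def by (intro sum.cong refl) (simp add: algebra_simps)
    thus ?thesis using Q2[of x] sx spos by (simp add: field_simps)
  qed
  define W where "W = {snf n (\<lambda>i j. A $$ (i,j) * B $$ (i,j)) | B. psd n B \<and> snf n (\<lambda>i j. B $$ (i,j)) = 1}"
  have Wlow: "1 / s \<le> w" if "w \<in> W" for w
  proof -
    obtain B where B: "psd n B" "snf n (\<lambda>i j. B $$ (i,j)) = 1" "w = snf n (\<lambda>i j. A $$ (i,j) * B $$ (i,j))"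
      using \<open>w \<in> W\<close> unfolding W_def by blast
    show ?thesis unfolding B(3)
      by (rule key_lower[OF n A(2) _ B(2) lowerc]) (use B(1) psd_iff in auto)
  qed
  have B0W: "snf n (\<lambda>i j. A $$ (i,j) * B0 $$ (i,j)) \<in> W" unfolding W_def using psdB0 snfB0 by blast
  have valB0: "snf n (\<lambda>i j. A $$ (i,j) * B0 $$ (i,j)) = 1 / s"
    using Wlow[OF B0W] Q4 AB0 by simp
  have Isp: "I_sp A = 1 / s" unfolding I_sp_eq[OF A(1)] W_def[symmetric]
    by (rule cInf_eq_minimum[OF B0W[unfolded valB0]]) (rule Wlow)
  thus "I_sp A = 1 / s" .
  have y: "(I_mat A \<cdot>\<^sub>v u) $ i = u $ i / s" if "i < n" for i
    using that u(1) Imat by simp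
  have "vnorm (vec n (\<lambda>i. complex_of_real (sqrt ((I_mat A \<cdot>\<^sub>v u) $ i)))) = nrm n v"
    by (subst vnorm_eq[of _ n]) (auto intro!: nrm_cong simp: v_def xs_def y)
  thus "vnorm (vec n (\<lambda>i. complex_of_real (sqrt ((I_mat A \<cdot>\<^sub>v u) $ i)))) = 1" using nv by simp
  have "spec_norm (A \<circ>\<^sub>h mat n n (\<lambda>(i,j). vec n (\<lambda>i. complex_of_real (sqrt ((I_mat A \<cdot>\<^sub>v u) $ i))) $ i *
        cnj (vec n (\<lambda>i. complex_of_real (sqrt ((I_mat A \<cdot>\<^sub>v u) $ i))) $ j))) = snf n (\<lambda>i j. A $$ (i,j) * B0 $$ (i,j))"
    unfolding spec_norm_eq[OF hadamard_carrier[OF A(1)]]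
    by (rule snf_cong) (simp add: hadamard_index[OF A(1)] B0_def xs_def y)
  thus "spec_norm (A \<circ>\<^sub>h mat n n (\<lambda>(i,j). vec n (\<lambda>i. complex_of_real (sqrt ((I_mat A \<cdot>\<^sub>v u) $ i))) $ i *
        cnj (vec n (\<lambda>i. complex_of_real (sqrt ((I_mat A \<cdot>\<^sub>v u) $ i))) $ j))) = I_sp A"
    using valB0 Isp by simp
qed

lemma sum_e1_all: "k < n \<Longrightarrow> (\<Sum>i<n. e1 k i) = 1"
  unfolding e1_def by simp

lemma I_mat_prop:
  assumes n: "n > 0" and psd: "psd n A"
  shows "0 \<le> I_mat A" "\<And>x. I_mat A * (cmod (\<Sum>i<n. x i))\<^sup>2 \<le> Re (Qf n (\<lambda>i j. A $$ (i,j)) x x)"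
proof -
  have A: "A \<in> carrier_mat n n" "psdf n (\<lambda>i j. A $$ (i,j))" using psd psd_iff by auto
  define T where "T = {t. t \<ge> 0 \<and> (\<forall>x. t * (cmod (\<Sum>i<n. x i))\<^sup>2 \<le> Re (Qf n (\<lambda>i j. A $$ (i,j)) x x))}"
  have I: "I_mat A = Sup T" unfolding I_mat_eq[OF psd] T_def ..
  have T0: "0 \<in> T" unfolding T_def using psdfD[OF A(2)] by auto
  have bdd: "bdd_above T"
  proof (rule bdd_aboveI)
    fix t assume "t \<in> T"
    hence "t * (cmod (\<Sum>i<n. e1 0 i))\<^sup>2 \<le> Re (Qf n (\<lambda>i j. A $$ (i,j)) (e1 0) (e1 0))" unfolding T_def by blast
    thus "t \<le> Re (A $$ (0,0))" using n by (simp add: sum_e1_all Qf_e1)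
  qed
  show "0 \<le> I_mat A" unfolding I using cSup_upper[OF T0 bdd] .
  fix x
  show "I_mat A * (cmod (\<Sum>i<n. x i))\<^sup>2 \<le> Re (Qf n (\<lambda>i j. A $$ (i,j)) x x)"
  proof (cases "cmod (\<Sum>i<n. x i) = 0")
    case True thus ?thesis using psdfD[OF A(2), of x] by simp
  next
    case False
    hence c: "(cmod (\<Sum>i<n. x i))\<^sup>2 > 0" by simp
    have "Sup T \<le> Re (Qf n (\<lambda>i j. A $$ (i,j)) x x) / (cmod (\<Sum>i<n. x i))\<^sup>2"
    proof (rule cSup_least)
      show "T \<noteq> {}" using T0 by blast
      fix t assume "t \<in> T"
      hence "t * (cmod (\<Sum>i<n. x i))\<^sup>2 \<le> Re (Qf n (\<lambda>i j. A $$ (i,j)) x x)" unfolding T_def by blast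
      thus "t \<le> Re (Qf n (\<lambda>i j. A $$ (i,j)) x x) / (cmod (\<Sum>i<n. x i))\<^sup>2" using c by (simp add: field_simps)
    qed
    thus ?thesis unfolding I using c by (simp add: field_simps)
  qed
qed

lemma simplex_min:
  fixes f :: "(nat \<Rightarrow> real) \<Rightarrow> real"
  assumes "continuous_on UNIV f" "n > 0"
  shows "\<exists>y. (\<forall>i<n. 0 \<le> y i) \<and> (\<Sum>i<n. y i) = 1 \<and>
     (\<forall>z. (\<forall>i<n. 0 \<le> z i) \<and> (\<Sum>i<n. z i) = 1 \<longrightarrow> f y \<le> f (\<lambda>i. if i < n then z i else 0))"
proof -
  define K0 where "K0 = PiE UNIV (\<lambda>i::nat. if i < n then {0..1::real} else {0})"
  have "compactin (product_topology (\<lambda>i. euclidean) UNIV) K0"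
    unfolding K0_def by (subst compactin_PiE) auto
  hence cK0: "compact K0" by (simp add: euclidean_product_topology)
  define S where "S = K0 \<inter> {y. (\<Sum>i<n. y i) = 1}"
  have "closed {y::nat\<Rightarrow>real. (\<Sum>i<n. y i) = 1}"
    by (intro closed_Collect_eq continuous_intros) auto
  hence cS: "compact S" unfolding S_def using cK0 compact_Int_closed by blast
  have e: "(\<lambda>i. if i = 0 then 1 else 0) \<in> S" using assms(2) unfolding S_def K0_def by (auto simp: PiE_def extensional_def)
  obtain y where y: "y \<in> S" "\<forall>z\<in>S. f y \<le> f z"
    using continuous_attains_inf[OF cS _ continuous_on_subset[OF assms(1)]] e by blast
  show ?thesis
  proof (rule exI[of _ y], intro conjI)
    show "\<forall>i<n. 0 \<le> y i" "(\<Sum>i<n. y i) = 1" using y(1) unfolding S_def K0_def by (auto simp: PiE_def Pi_def split: if_splits)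
    show "\<forall>z. (\<forall>i<n. 0 \<le> z i) \<and> (\<Sum>i<n. z i) = 1 \<longrightarrow> f y \<le> f (\<lambda>i. if i < n then z i else 0)"
    proof (intro allI impI)
      fix z :: "nat \<Rightarrow> real" assume z: "(\<forall>i<n. 0 \<le> z i) \<and> (\<Sum>i<n. z i) = 1"
      have le1: "z i \<le> 1" if "i < n" for i
      proof -
        have "z i \<le> (\<Sum>i<n. z i)" using z that by (intro member_le_sum) auto
        thus ?thesis using z by simp
      qed
      have "(\<lambda>i. if i < n then z i else 0) \<in> S" using z le1 unfolding S_def K0_def
        by (auto simp: PiE_def extensional_def)
      thus "f y \<le> f (\<lambda>i. if i < n then z i else 0)" using y by blast
    qed
  qed
qed

lemma dsum1: "k < n \<Longrightarrow> (\<Sum>i<n. \<Sum>j<n. if i = k then h i j else 0) = (\<Sum>j<(n::nat). h k j)"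
proof -
  assume k: "k < n"
  have "(\<Sum>i<n. \<Sum>j<n. if i = k then h i j else 0) = (\<Sum>i<n. if i = k then (\<Sum>j<n. h i j) else 0)"
    by (intro sum.cong refl) auto
  also have "\<dots> = (\<Sum>j<n. h k j)" using k by (simp add: sum.delta)
  finally show ?thesis .
qed

lemma dsum2: "k < n \<Longrightarrow> (\<Sum>i<n. \<Sum>j<n. if j = k then h i j else 0) = (\<Sum>i<(n::nat). h i k)"
  by (intro sum.cong refl) (simp add: sum.delta)

lemma dsum3: "k < n \<Longrightarrow> (\<Sum>i<n. \<Sum>j<n. if i = k \<and> j = k then h i j else 0) = h k (k::nat)"
proof -
  assume k: "k < n"
  have "(\<Sum>i<n. \<Sum>j<n. if i = k \<and> j = k then h i j else 0) = (\<Sum>i<n. \<Sum>j<n. if i = k then (if j = k then h i j else 0) else 0)"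
    by (intro sum.cong refl) auto
  also have "\<dots> = (\<Sum>j<n. if j = k then h k j else 0)" by (rule dsum1[OF k])
  also have "\<dots> = h k k" using k by (simp add: sum.delta)
  finally show ?thesis .
qed

lemma quad_zero:
  fixes b c :: real
  assumes "\<And>t. 0 \<le> 2 * t * b + t\<^sup>2 * c"
  shows "b = 0"
proof (rule ccontr)
  assume b: "b \<noteq> 0"
  define C where "C = \<bar>c\<bar> + 1"
  have C1: "C > 0" unfolding C_def by (cases "c \<ge> 0") auto
  have C2: "c - 2 * C < 0"
  proof -
    have "c < 2 * (\<bar>c\<bar> + 1)" by (cases "c \<ge> 0") auto
    thus ?thesis unfolding C_def by linarith
  qed
  note C = C1 C2
  define t where "t = - b / C"
  have "0 \<le> 2 * t * b + t\<^sup>2 * c" by (rule assms)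
  also have "\<dots> = b\<^sup>2 / C\<^sup>2 * (c - 2 * C)"
    unfolding t_def using C by (simp add: field_simps power2_eq_square)
  also have "\<dots> < 0"
  proof (rule mult_pos_neg)
    show "0 < b\<^sup>2 / C\<^sup>2" using b C by simp
    show "c - 2 * C < 0" by (rule C(2))
  qed
  finally show False by simp
qed

lemma conv:
  fixes A :: "complex mat"
  assumes n: "n > 0" and psd: "psd n A"
    and ent: "\<forall>i<n. \<forall>j<n. Im (A $$ (i,j)) = 0 \<and> Re (A $$ (i,j)) \<ge> 0"
    and diag: "\<forall>i<n. A $$ (i,i) \<noteq> 0"
    and eq: "I_sp A = I_mat A"
  shows "\<exists>u \<in> carrier_vec n. (\<forall>i<n. u $ i \<ge> (0::real)) \<and> A *\<^sub>v map_vec complex_of_real u = vec n (\<lambda>_. 1)"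
proof -
  have A: "A \<in> carrier_mat n n" "psdf n (\<lambda>i j. A $$ (i,j))" using psd psd_iff by auto
  define a where "a = (\<lambda>i j. Re (A $$ (i,j)))"
  have Aa: "A $$ (i,j) = complex_of_real (a i j)" if "i < n" "j < n" for i j
    using ent that unfolding a_def by (simp add: complex_eq_iff)
  have a0: "0 \<le> a i j" if "i < n" "j < n" for i j using ent that unfolding a_def by simp
  have sym: "a j i = a i j" if "i < n" "j < n" for i j
    using psdf_herm[OF A(2) that] Aa that by simp
  define f where "f = (\<lambda>y::nat \<Rightarrow> real. \<Sum>i<n. \<Sum>j<n. a i j * y i * y j)"
  have fc: "continuous_on UNIV f" unfolding f_def by (intro continuous_intros) auto
  have Qreal: "Qf n (\<lambda>i j. A $$ (i,j)) (\<lambda>i. complex_of_real (y i)) (\<lambda>i. complex_of_real (y i)) = complex_of_real (f y)" for y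
    unfolding Qf_def f_def of_real_sum by (intro sum.cong refl) (simp add: Aa)
  obtain y where y0: "\<forall>i<n. 0 \<le> y i" and y1: "(\<Sum>i<n. y i) = 1"
    and ymin: "\<forall>z. (\<forall>i<n. 0 \<le> z i) \<and> (\<Sum>i<n. z i) = 1 \<longrightarrow> f y \<le> f (\<lambda>i. if i < n then z i else 0)"
    using simplex_min[OF fc n] by blast
  have frestr: "f (\<lambda>i. if i < n then z i else 0) = f z" for z unfolding f_def by (intro sum.cong refl) auto
  define m where "m = f y"
  have lowerc: "m \<le> Re (\<Sum>i<n. \<Sum>j<n. A $$ (i,j) * complex_of_real ((cmod (z i))\<^sup>2 * (cmod (z j))\<^sup>2))"
    if z: "nrm n z = 1" for z
  proof -
    define w where "w = (\<lambda>i. (cmod (z i))\<^sup>2)"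
    have "(\<Sum>i<n. w i) = 1" unfolding w_def using nrm_sq[of n z] z by simp
    hence "m \<le> f w" using ymin frestr unfolding m_def w_def by auto
    also have "f w = Re (\<Sum>i<n. \<Sum>j<n. A $$ (i,j) * complex_of_real ((cmod (z i))\<^sup>2 * (cmod (z j))\<^sup>2))"
      unfolding f_def w_def Re_sum by (intro sum.cong refl) (simp add: Aa)
    finally show ?thesis .
  qed
  define v where "v = e1 0"
  have nv: "nrm n v = 1" unfolding v_def using nrm_e1[OF n] .
  define B0 where "B0 = mat n n (\<lambda>(i,j). v i * cnj (v j))"
  have psdB0: "psd n B0" unfolding psd_iff
    using psdf_cong[OF rank1_psdf[of n v], of "\<lambda>i j. B0 $$ (i,j)"] unfolding B0_def by auto
  have snfB0: "snf n (\<lambda>i j. B0 $$ (i,j)) = 1"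
    using rank1_snf[OF n nv] snf_cong[of n "\<lambda>i j. B0 $$ (i,j)" "\<lambda>i j. v i * cnj (v j)"] unfolding B0_def by simp
  define W where "W = {snf n (\<lambda>i j. A $$ (i,j) * B $$ (i,j)) | B. psd n B \<and> snf n (\<lambda>i j. B $$ (i,j)) = 1}"
  have "W \<noteq> {}" unfolding W_def using psdB0 snfB0 by blast
  moreover have "m \<le> w" if "w \<in> W" for w
  proof -
    obtain B where B: "psd n B" "snf n (\<lambda>i j. B $$ (i,j)) = 1" "w = snf n (\<lambda>i j. A $$ (i,j) * B $$ (i,j))"
      using \<open>w \<in> W\<close> unfolding W_def by blast
    show ?thesis unfolding B(3)
      by (rule key_lower[OF n A(2) _ B(2) lowerc]) (use B(1) psd_iff in auto)
  qed
  ultimately have m_le: "m \<le> I_sp A" unfolding I_sp_eq[OF A(1)] W_def[symmetric] by (intro cInf_greatest) auto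
  note IP = I_mat_prop[OF n psd]
  have Imat_le: "I_mat A \<le> m"
  proof -
    have "I_mat A * (cmod (\<Sum>i<n. complex_of_real (y i)))\<^sup>2 \<le> Re (Qf n (\<lambda>i j. A $$ (i,j)) (\<lambda>i. complex_of_real (y i)) (\<lambda>i. complex_of_real (y i)))"
      by (rule IP(2))
    thus ?thesis unfolding Qreal m_def of_real_sum[symmetric] y1 by simp
  qed
  have Im: "I_mat A = m" using m_le Imat_le eq by simp
  obtain k where k: "k < n" "y k > 0"
  proof -
    have "(\<forall>i<n. y i = 0) \<Longrightarrow> (\<Sum>i<n. y i) = 0" by simp
    hence "\<not> (\<forall>i<n. y i = 0)" using y1 by fastforce
    then obtain k where "k < n" "y k \<noteq> 0" by blast
    thus ?thesis using that y0 by force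
  qed
  have akk: "a k k > 0" using diag k(1) a0[OF k(1) k(1)] Aa[OF k(1) k(1)] by force
  have mpos: "m > 0"
  proof -
    have "a k k * y k * y k \<le> (\<Sum>j<n. a k j * y k * y j)"
      using k y0 a0 by (intro member_le_sum) auto
    also have "\<dots> \<le> f y" unfolding f_def
      using k y0 a0 by (intro member_le_sum[where f="\<lambda>i. \<Sum>j<n. a i j * y i * y j"] sum_nonneg) auto
    finally show ?thesis unfolding m_def using akk k by (smt (verit) mult_pos_pos)
  qed
  have grad: "(\<Sum>j<n. a i j * y j) = m" if i: "i < n" for i
  proof -
    define b where "b = (\<Sum>j<n. a i j * y j)"
    have "0 \<le> 2 * t * (b - m) + t\<^sup>2 * (a i i - m)" for t
    proof -
      define y' where "y' = (\<lambda>j. y j + t * (if j = i then 1 else 0))"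
      have s': "(\<Sum>j<n. y' j) = 1 + t" unfolding y'_def sum.distrib y1 using i
        by (simp add: sum_distrib_left[symmetric])
      have "f y' = (\<Sum>p<n. \<Sum>q<n. a p q * y p * y q + t * (if p = i then a p q * y q else 0)
           + t * (if q = i then a p q * y p else 0) + t\<^sup>2 * (if p = i \<and> q = i then a p q else 0))"
        unfolding f_def y'_def by (intro sum.cong refl) (auto simp: algebra_simps power2_eq_square)
      also have "\<dots> = f y + t * (\<Sum>q<n. a i q * y q) + t * (\<Sum>p<n. a p i * y p) + t\<^sup>2 * a i i"
        unfolding f_def sum.distrib sum_distrib_left[symmetric] dsum1[OF i] dsum2[OF i] dsum3[OF i] ..
      also have "(\<Sum>p<n. a p i * y p) = b" unfolding b_def using i by (intro sum.cong refl) (simp add: sym)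
      finally have fy': "f y' = m + 2 * t * b + t\<^sup>2 * a i i" unfolding m_def b_def by simp
      have "I_mat A * (cmod (\<Sum>j<n. complex_of_real (y' j)))\<^sup>2 \<le> Re (Qf n (\<lambda>i j. A $$ (i,j)) (\<lambda>j. complex_of_real (y' j)) (\<lambda>j. complex_of_real (y' j)))"
        by (rule IP(2))
      hence "m * (1 + t)\<^sup>2 \<le> m + 2 * t * b + t\<^sup>2 * a i i"
        unfolding Qreal of_real_sum[symmetric] s' Im fy' by (simp only: norm_of_real Re_complex_of_real power2_abs)
      thus ?thesis by (simp add: power2_eq_square algebra_simps)
    qed
    hence "b - m = 0" by (rule quad_zero)
    thus ?thesis unfolding b_def by simp
  qed
  define u where "u = vec n (\<lambda>i. y i / m)"
  have "u \<in> carrier_vec n" unfolding u_def by simp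
  moreover have "\<forall>i<n. u $ i \<ge> 0" unfolding u_def using y0 mpos by simp
  moreover have "A *\<^sub>v map_vec complex_of_real u = vec n (\<lambda>_. 1)"
  proof (rule eq_vecI)
    show "dim_vec (A *\<^sub>v map_vec complex_of_real u) = dim_vec (vec n (\<lambda>_. 1::complex))" using A by simp
    fix i assume "i < dim_vec (vec n (\<lambda>_. 1::complex))"
    hence i: "i < n" by simp
    have "(A *\<^sub>v map_vec complex_of_real u) $ i = (\<Sum>j<n. A $$ (i,j) * complex_of_real (y j / m))"
      using A i by (simp add: scalar_prod_def Matrix.row_def atLeast0LessThan u_def)
    also have "\<dots> = complex_of_real ((\<Sum>j<n. a i j * y j) / m)"
      unfolding of_real_sum sum_divide_distrib using i by (intro sum.cong refl) (simp add: Aa)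
    also have "\<dots> = 1" using grad[OF i] mpos by simp
    finally show "(A *\<^sub>v map_vec complex_of_real u) $ i = vec n (\<lambda>_. 1) $ i" using i by simp
  qed
  ultimately show ?thesis by blast
qed

lemma pick_bij:
  assumes "finite J"
  shows "bij_betw (pick J) {..<card J} J"
  unfolding bij_betw_def
proof
  show "inj_on (pick J) {..<card J}"
  proof (rule inj_onI)
    fix k l assume kl: "k \<in> {..<card J}" "l \<in> {..<card J}" "pick J k = pick J l"
    have k: "k < card J" and l: "l < card J" using kl(1,2) by simp_all
    show "k = l"
    proof (rule ccontr)
      assume "k \<noteq> l"
      hence "k < l \<or> l < k" by linarith
      moreover have "k < l \<Longrightarrow> pick J k < pick J l" by (rule pick_mono_le[OF l])
      moreover have "l < k \<Longrightarrow> pick J l < pick J k" by (rule pick_mono_le[OF k])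
      ultimately show False using kl(3) by linarith
    qed
  qed
  show "pick J ` {..<card J} = J"
  proof
    show "pick J ` {..<card J} \<subseteq> J"
    proof
      fix j assume "j \<in> pick J ` {..<card J}"
      then obtain k where k: "k < card J" "j = pick J k" by blast
      show "j \<in> J" unfolding k(2) by (rule pick_in_set_le[OF k(1)])
    qed
    show "J \<subseteq> pick J ` {..<card J}"
    proof
      fix j assume j: "j \<in> J"
      have "{a\<in>J. a < j} \<subset> J" using j by blast
      hence c: "card {a\<in>J. a < j} \<in> {..<card J}" using assms psubset_card_mono by blast
      have "j = pick J (card {a\<in>J. a < j})" using j by (rule pick_card_in_set[symmetric])
      thus "j \<in> pick J ` {..<card J}" using c by (rule image_eqI)
    qed
  qed
qed

lemma sub_sum:
  assumes "finite J" "J \<subseteq> {..<n}" "\<And>i. i < n \<Longrightarrow> i \<notin> J \<Longrightarrow> h i = 0"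
  shows "(\<Sum>i<n. h i) = (\<Sum>k<card J. h (pick J k))"
proof -
  have "(\<Sum>i<n. h i) = (\<Sum>i\<in>J. h i)" using assms by (intro sum.mono_neutral_right) auto
  also have "\<dots> = (\<Sum>k<card J. h (pick J k))" using sum.reindex_bij_betw[OF pick_bij[OF assms(1)], of h] by simp
  finally show ?thesis .
qed

lemma sub_main:
  fixes A :: "complex mat" and u :: "real vec"
  assumes n: "n > 0" and psd: "psd n A"
    and ent: "\<forall>i<n. \<forall>j<n. Im (A $$ (i,j)) = 0 \<and> Re (A $$ (i,j)) \<ge> 0"
    and u: "u \<in> carrier_vec n" "\<forall>i<n. u $ i \<ge> 0" "A *\<^sub>v map_vec complex_of_real u = vec n (\<lambda>_. 1)"
  defines "J \<equiv> {i. i < n \<and> u $ i \<noteq> 0}"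
  shows "I_mat (submatrix A J J) = 1 / (\<Sum>i<n. u $ i)" "I_sp (submatrix A J J) = 1 / (\<Sum>i<n. u $ i)"
proof -
  have A: "A \<in> carrier_mat n n" "psdf n (\<lambda>i j. A $$ (i,j))" using psd psd_iff by auto
  have finJ: "finite J" and Jsub: "J \<subseteq> {..<n}" unfolding J_def by auto
  define m where "m = card J"
  define AJ where "AJ = submatrix A J J"
  have setJ: "{i. i < dim_row A \<and> i \<in> J} = J" "{i. i < dim_col A \<and> i \<in> J} = J" using A(1) Jsub by auto
  have cr: "card {i. i < dim_row A \<and> i \<in> J} = m" "card {i. i < dim_col A \<and> i \<in> J} = m"
    unfolding m_def setJ by simp_all
  have AJc: "AJ \<in> carrier_mat m m" unfolding AJ_def carrier_mat_def using dim_submatrix[of A J J] cr by simp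
  have AJe: "AJ $$ (k,l) = A $$ (pick J k, pick J l)" if "k < m" "l < m" for k l
  proof -
    have "k < card {i. i < dim_row A \<and> i \<in> J}" "l < card {j. j < dim_col A \<and> j \<in> J}" using that cr by auto
    thus ?thesis unfolding AJ_def by (rule submatrix_index)
  qed
  have pJ: "pick J k \<in> J" if "k < m" for k using pick_in_set_le that unfolding m_def by auto
  have pJn: "pick J k < n" if "k < m" for k using pJ[OF that] Jsub by auto
  have Jne: "J \<noteq> {}"
  proof
    assume "J = {}"
    hence "\<forall>j<n. u $ j = 0" unfolding J_def by auto
    hence "(\<Sum>j<n. Re (A $$ (0,j)) * u $ j) = 0" by simp
    thus False using Au_conv[OF A(1) u(1) u(3) ent n] by simp
  qed
  hence mpos: "m > 0" unfolding m_def using finJ by (simp add: card_gt_0_iff)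
  have zero_out: "u $ j = 0" if "j < n" "j \<notin> J" for j using that unfolding J_def by auto
  have psdAJ: "psd m AJ" unfolding psd_iff
  proof (rule conjI[OF AJc], rule psdfI)
    fix x' :: "nat \<Rightarrow> complex"
    define x where "x = (\<lambda>i. if i \<in> J then x' (card {a\<in>J. a < i}) else 0)"
    have xp: "x (pick J k) = x' k" if "k < m" for k
      using pJ[OF that] card_pick_le[of k J] that unfolding x_def m_def by simp
    have "Qf n (\<lambda>i j. A $$ (i,j)) x x = (\<Sum>k<m. \<Sum>j<n. cnj (x (pick J k)) * A $$ (pick J k, j) * x j)"
      unfolding Qf_def m_def by (rule sub_sum[OF finJ Jsub]) (simp add: x_def)
    also have "\<dots> = (\<Sum>k<m. \<Sum>l<m. cnj (x (pick J k)) * A $$ (pick J k, pick J l) * x (pick J l))"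
      unfolding m_def by (rule sum.cong[OF refl], rule sub_sum[OF finJ Jsub]) (simp add: x_def)
    also have "\<dots> = Qf m (\<lambda>k l. AJ $$ (k,l)) x' x'"
      unfolding Qf_def by (rule sum.cong[OF refl], rule sum.cong[OF refl]) (simp add: AJe xp)
    finally have "Qf m (\<lambda>k l. AJ $$ (k,l)) x' x' = Qf n (\<lambda>i j. A $$ (i,j)) x x" by simp
    thus "Im (Qf m (\<lambda>k l. AJ $$ (k,l)) x' x') = 0 \<and> 0 \<le> Re (Qf m (\<lambda>k l. AJ $$ (k,l)) x' x')"
      using psdfD[OF A(2)] by simp
  qed
  have entJ: "\<forall>i<m. \<forall>j<m. Im (AJ $$ (i,j)) = 0 \<and> Re (AJ $$ (i,j)) \<ge> 0"
  proof (intro allI impI)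
    fix i j assume ij: "i < m" "j < m"
    show "Im (AJ $$ (i,j)) = 0 \<and> Re (AJ $$ (i,j)) \<ge> 0"
      unfolding AJe[OF ij] using ent pJn[OF ij(1)] pJn[OF ij(2)] by blast
  qed
  define u' where "u' = vec m (\<lambda>k. u $ pick J k)"
  have u'c: "u' \<in> carrier_vec m" unfolding u'_def by simp
  have u'0: "\<forall>i<m. u' $ i \<ge> 0" unfolding u'_def using u(2) pJn by simp
  have Au': "AJ *\<^sub>v map_vec complex_of_real u' = vec m (\<lambda>_. 1)"
  proof (rule eq_vecI)
    show "dim_vec (AJ *\<^sub>v map_vec complex_of_real u') = dim_vec (vec m (\<lambda>_. 1::complex))" using AJc by simp
    fix k assume "k < dim_vec (vec m (\<lambda>_. 1::complex))"
    hence k: "k < m" by simp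
    have "(AJ *\<^sub>v map_vec complex_of_real u') $ k = (\<Sum>l<m. AJ $$ (k,l) * complex_of_real (u' $ l))"
      using AJc k u'c by (simp add: scalar_prod_def Matrix.row_def atLeast0LessThan)
    also have "\<dots> = (\<Sum>l<m. A $$ (pick J k, pick J l) * complex_of_real (u $ pick J l))"
      by (rule sum.cong[OF refl]) (use k in \<open>simp add: AJe u'_def\<close>)
    also have "\<dots> = (\<Sum>j<n. A $$ (pick J k, j) * complex_of_real (u $ j))"
      unfolding m_def by (rule sub_sum[OF finJ Jsub, symmetric]) (simp add: zero_out)
    also have "\<dots> = (A *\<^sub>v map_vec complex_of_real u) $ pick J k"
      using A(1) u(1) pJn[OF k] by (simp add: scalar_prod_def Matrix.row_def atLeast0LessThan)
    also have "\<dots> = 1" using u(3) pJn[OF k] by simp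
    finally show "(AJ *\<^sub>v map_vec complex_of_real u') $ k = vec m (\<lambda>_. 1) $ k" using k by simp
  qed
  have su: "(\<Sum>k<m. u' $ k) = (\<Sum>i<n. u $ i)"
  proof -
    have "(\<Sum>i<n. u $ i) = (\<Sum>k<m. u $ pick J k)" unfolding m_def by (rule sub_sum[OF finJ Jsub]) (simp add: zero_out)
    also have "\<dots> = (\<Sum>k<m. u' $ k)" unfolding u'_def by (rule sum.cong[OF refl]) simp
    finally show ?thesis by simp
  qed
  note MM = main_mat[OF mpos psdAJ entJ u'c u'0 Au', unfolded su]
  show "I_mat (submatrix A J J) = 1 / (\<Sum>i<n. u $ i)" using MM(2) unfolding AJ_def .
  show "I_sp (submatrix A J J) = 1 / (\<Sum>i<n. u $ i)" using MM(3) unfolding AJ_def .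
qed

theorem theorem2p8:
  fixes A :: "complex mat" and n :: nat
  assumes "n > 0"
    and "psd n A"
    and "\<forall>i<n. \<forall>j<n. Im (A $$ (i,j)) = 0 \<and> Re (A $$ (i,j)) \<ge> 0"
    and "\<forall>i<n. A $$ (i,i) \<noteq> 0"
  shows "((\<exists>u \<in> carrier_vec n. (\<forall>i<n. u $ i \<ge> (0::real)) \<and>
              A *\<^sub>v map_vec complex_of_real u = vec n (\<lambda>_. 1))
          \<longleftrightarrow> I_sp A = I_mat A)
    \<and> (\<forall>u \<in> carrier_vec n. (\<forall>i<n. u $ i \<ge> (0::real)) \<and>
              A *\<^sub>v map_vec complex_of_real u = vec n (\<lambda>_. 1) \<longrightarrow>
         (let y = I_mat A \<cdot>\<^sub>v u;
              x = vec n (\<lambda>i. complex_of_real (sqrt (y $ i)));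
              J = {i. i < n \<and> u $ i \<noteq> 0}
          in vnorm x = 1
             \<and> spec_norm (A \<circ>\<^sub>h mat n n (\<lambda>(i,j). x $ i * cnj (x $ j))) = I_sp A
             \<and> I_mat A = I_mat (submatrix A J J)
             \<and> I_mat (submatrix A J J) = I_sp (submatrix A J J)
             \<and> I_sp (submatrix A J J) = I_sp A))"
proof (intro conjI)
  show "(\<exists>u \<in> carrier_vec n. (\<forall>i<n. u $ i \<ge> (0::real)) \<and>
              A *\<^sub>v map_vec complex_of_real u = vec n (\<lambda>_. 1))
          \<longleftrightarrow> I_sp A = I_mat A"
  proof
    assume "\<exists>u \<in> carrier_vec n. (\<forall>i<n. u $ i \<ge> (0::real)) \<and> A *\<^sub>v map_vec complex_of_real u = vec n (\<lambda>_. 1)"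
    then obtain u :: "real vec" where u: "u \<in> carrier_vec n" "\<forall>i<n. u $ i \<ge> 0" "A *\<^sub>v map_vec complex_of_real u = vec n (\<lambda>_. 1)"
      by blast
    note MM = main_mat[OF assms(1,2,3) u]
    show "I_sp A = I_mat A" using MM(2,3) by simp
  next
    assume "I_sp A = I_mat A"
    thus "\<exists>u \<in> carrier_vec n. (\<forall>i<n. u $ i \<ge> (0::real)) \<and> A *\<^sub>v map_vec complex_of_real u = vec n (\<lambda>_. 1)"
      by (rule conv[OF assms])
  qed
  show "\<forall>u \<in> carrier_vec n. (\<forall>i<n. u $ i \<ge> (0::real)) \<and>
              A *\<^sub>v map_vec complex_of_real u = vec n (\<lambda>_. 1) \<longrightarrow>
         (let y = I_mat A \<cdot>\<^sub>v u;
              x = vec n (\<lambda>i. complex_of_real (sqrt (y $ i)));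
              J = {i. i < n \<and> u $ i \<noteq> 0}
          in vnorm x = 1
             \<and> spec_norm (A \<circ>\<^sub>h mat n n (\<lambda>(i,j). x $ i * cnj (x $ j))) = I_sp A
             \<and> I_mat A = I_mat (submatrix A J J)
             \<and> I_mat (submatrix A J J) = I_sp (submatrix A J J)
             \<and> I_sp (submatrix A J J) = I_sp A)"
  proof (intro ballI impI)
    fix u :: "real vec" assume uc: "u \<in> carrier_vec n"
      and uh: "(\<forall>i<n. u $ i \<ge> (0::real)) \<and> A *\<^sub>v map_vec complex_of_real u = vec n (\<lambda>_. 1)"
    note MM = main_mat[OF assms(1,2,3) uc conjunct1[OF uh] conjunct2[OF uh]]
    note SM = sub_main[OF assms(1,2,3) uc conjunct1[OF uh] conjunct2[OF uh]]
    show "let y = I_mat A \<cdot>\<^sub>v u;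
              x = vec n (\<lambda>i. complex_of_real (sqrt (y $ i)));
              J = {i. i < n \<and> u $ i \<noteq> 0}
          in vnorm x = 1
             \<and> spec_norm (A \<circ>\<^sub>h mat n n (\<lambda>(i,j). x $ i * cnj (x $ j))) = I_sp A
             \<and> I_mat A = I_mat (submatrix A J J)
             \<and> I_mat (submatrix A J J) = I_sp (submatrix A J J)
             \<and> I_sp (submatrix A J J) = I_sp A"
      unfolding Let_def using MM(2-5) SM by simp
  qed
qed

end
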